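(* Let $d=1$, $2\le p<\infty$. Let $W_1,W_2:\mathbb{R}\times\mathbb{R}\to\mathbb{R}$ be energy densities satisfying the standing assumptions in the context. For $i=1,2$ let $\zeta\mapsto\psi_i(y,\zeta)$ denote the reciprocal function of $\xi\mapsto\partial_\xi W_i(y,\xi)$. Assume that for $i=1,2$ and almost every $y\in(0,1)$: $\xi\mapsto W_i(y,\xi)$ attains its minimum at $\xi=0$, and $\xi\mapsto\partial^2_\xi W_i(y,\xi)$ is non-decreasing for $\xi\ge0$ and non-increasing for $\xi\le0$. Assume further that for all $\xi,\zeta\in\mathbb{R}$ and almost every $y\in(0,1)$, $$\xi\,\partial_\xi W_2(y,\xi)\ge\xi\,\partial_\xi W_1(y,\xi)\qquad\text{and}\qquad \partial^2_\xi W_2\big(y,\psi_2(y,\zeta)\big)\ge\partial^2_\xi W_1\big(y,\psi_1(y,\zeta)\big).$$ For $i=1,2$ define $$W_i^\star(\xi)=\inf\left\{\int_0^1 W_i\big(y,\xi+w'(y)\big)\,dy,\ \ w\in W^{1,p}_\#(0,1),\ \int_0^1 w=0\right\}.$$ Then for all $\xi\in\mathbb{R}$, $\partial^2_\xi W_2^\star(\xi)\ge\partial^2_\xi W_1^\star(\xi)$.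
   Context: Standing assumptions on an energy density $W(y,\xi)$: for every $\xi$, $y\mapsto W(y,\xi)$ is measurable and $1$-periodic; $W$ is $C^3$ in $\xi$; there exist $c_2\ge c_1>0$ with $c_1|\xi|^p\le W(y,\xi)\le c_2(1+|\xi|^p)$ for all $y,\xi$; and $\partial^2_\xi W(y,\xi)>0$ for all $\xi$ and a.e. $y$ (strict convexity), so that $\xi\mapsto\partial_\xi W(y,\xi)$ is increasing and has an increasing reciprocal function. $W^{1,p}_\#(0,1)$ is the set of $1$-periodic functions in $W^{1,p}_{\rm loc}(\mathbb{R})$. *)

theory Defs
  imports "HOL-Analysis.Analysis"
begin

definition energy_density :: "real \<Rightarrow> (real \<Rightarrow> real \<Rightarrow> real) \<Rightarrow> bool" where
  "energy_density p W \<longleftrightarrow>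
     (\<forall>\<xi>. (\<lambda>y. W y \<xi>) \<in> borel_measurable lborel) \<and>
     (\<forall>y \<xi>. W (y + 1) \<xi> = W y \<xi>) \<and>
     (\<forall>y. \<exists>D1 D2 D3. \<forall>\<xi>.
          (W y has_real_derivative D1 \<xi>) (at \<xi>) \<and>
          (D1 has_real_derivative D2 \<xi>) (at \<xi>) \<and>
          (D2 has_real_derivative D3 \<xi>) (at \<xi>) \<and> isCont D3 \<xi>) \<and>
     (\<exists>c1 c2. 0 < c1 \<and> c1 \<le> c2 \<and>
        (\<forall>y \<xi>. c1 * \<bar>\<xi>\<bar> powr p \<le> W y \<xi> \<and> W y \<xi> \<le> c2 * (1 + \<bar>\<xi>\<bar> powr p))) \<and>
     (AE y in lborel. \<forall>\<xi>. deriv (deriv (W y)) \<xi> > 0)"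

definition recip_psi :: "(real \<Rightarrow> real \<Rightarrow> real) \<Rightarrow> real \<Rightarrow> real \<Rightarrow> real" where
  "recip_psi W y \<zeta> = (THE \<xi>. deriv (W y) \<xi> = \<zeta>)"

text \<open>w (continuous representative) lies in W^{1,p}_#(0,1) with weak derivative w'.\<close>
definition W1p_per :: "real \<Rightarrow> (real \<Rightarrow> real) \<Rightarrow> (real \<Rightarrow> real) \<Rightarrow> bool" where
  "W1p_per p w w' \<longleftrightarrow>
     (\<forall>x. w (x + 1) = w x) \<and> (\<forall>x. w' (x + 1) = w' x) \<and>
     w' \<in> borel_measurable lborel \<and>
     set_integrable lborel {0..1} (\<lambda>y. \<bar>w' y\<bar> powr p) \<and>
     set_integrable lborel {0..1} w' \<and>
     (\<forall>x. w x = w 0 + (LBINT t=0..x. w' t))"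

definition Wstar :: "real \<Rightarrow> (real \<Rightarrow> real \<Rightarrow> real) \<Rightarrow> real \<Rightarrow> real" where
  "Wstar p W \<xi> = Inf {(LBINT y=0..1. W y (\<xi> + w' y)) | w w'.
                         W1p_per p w w' \<and> (LBINT y=0..1. w y) = 0}"

end

theory Submission
  imports Defs
begin

lemma mvt_real:
  fixes f f' :: "real \<Rightarrow> real"
  assumes "a < b" and d: "\<And>x. (f has_real_derivative f' x) (at x)"
  shows "\<exists>z. a < z \<and> z < b \<and> f b - f a = (b - a) * f' z"
proof -
  have "continuous_on {a..b} f"
    using d by (meson DERIV_isCont continuous_at_imp_continuous_on)
  moreover have "\<And>x. f differentiable (at x)" using d real_differentiable_def by blast
  ultimately obtain l z where "a < z" "z < b" "DERIV f z :> l" "f b - f a = (b - a) * l"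
    using MVT[OF assms(1)] by blast
  moreover have "l = f' z" using DERIV_unique[OF \<open>DERIV f z :> l\<close> d] .
  ultimately show ?thesis by blast
qed

locale onedim =
  fixes f :: "real \<Rightarrow> real" and p c1 c2 :: real
  assumes p2: "2 \<le> p" and c1: "0 < c1"
    and d1: "\<And>x. (f has_real_derivative deriv f x) (at x)"
    and d2: "\<And>x. (deriv f has_real_derivative deriv (deriv f) x) (at x)"
    and f2_cont: "\<And>x. isCont (deriv (deriv f)) x"
    and pos: "\<And>x. deriv (deriv f) x > 0"
    and growl: "\<And>x. c1 * \<bar>x\<bar> powr p \<le> f x"
    and growu: "\<And>x. f x \<le> c2 * (1 + \<bar>x\<bar> powr p)"
    and min0: "\<And>x. f 0 \<le> f x"
    and monop: "\<And>a b. 0 \<le> a \<Longrightarrow> a \<le> b \<Longrightarrow> deriv (deriv f) a \<le> deriv (deriv f) b"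
    and monon: "\<And>a b. a \<le> b \<Longrightarrow> b \<le> 0 \<Longrightarrow> deriv (deriv f) b \<le> deriv (deriv f) a"
begin

abbreviation "f1 \<equiv> deriv f"
abbreviation "f2 \<equiv> deriv (deriv f)"

lemma f1_less: assumes "a < b" shows "f1 a < f1 b"
proof -
  obtain z where "f1 b - f1 a = (b - a) * f2 z" using mvt_real[OF assms d2] by blast
  moreover have "(b - a) * f2 z > 0" using assms pos[of z] by simp
  ultimately show ?thesis by simp
qed

lemma f1_le_iff: "f1 a \<le> f1 b \<longleftrightarrow> a \<le> b"
proof
  assume h: "f1 a \<le> f1 b"
  show "a \<le> b"
  proof (rule ccontr)
    assume "\<not> a \<le> b"
    then have "b < a" by simp
    then have "f1 b < f1 a" by (rule f1_less)
    then show False using h by simp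
  qed
next
  assume "a \<le> b"
  then show "f1 a \<le> f1 b"
  proof (cases "a = b")
    case False
    then have "a < b" using \<open>a \<le> b\<close> by simp
    then show ?thesis using f1_less[of a b] by simp
  qed simp
qed

lemma f1_less_iff: "f1 a < f1 b \<longleftrightarrow> a < b"
  by (simp only: not_le[symmetric] f1_le_iff)

lemma f1_eq_iff: "f1 a = f1 b \<longleftrightarrow> a = b"
  by (simp add: order_eq_iff f1_le_iff)

lemma f1_cont: "isCont f1 x" using d2 DERIV_isCont by blast

lemma f_nonneg: "0 \<le> f x"
proof -
  have "0 \<le> c1 * \<bar>x\<bar> powr p" using c1 by simp
  then show ?thesis using growl[of x] by linarith
qed

lemma f0_le: "f 0 \<le> c2" using growu[of 0] by simp

lemma f1_0: "f1 0 = 0"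
  by (rule DERIV_local_min[OF d1[of 0] zero_less_one]) (auto simp: min0)

lemma tangent: "f t \<ge> f a + f1 a * (t - a)"
proof (cases t a rule: linorder_cases)
  case less
  then obtain z where z: "t < z" "z < a" "f a - f t = (a - t) * f1 z" using mvt_real[OF _ d1] by blast
  have "f1 z \<le> f1 a" using z f1_le_iff by simp
  then have "(a - t) * f1 z \<le> (a - t) * f1 a" using less by (simp add: mult_left_mono)
  then show ?thesis using z by (simp add: algebra_simps)
next
  case greater
  then obtain z where z: "a < z" "z < t" "f t - f a = (t - a) * f1 z" using mvt_real[OF _ d1] by blast
  have "f1 a \<le> f1 z" using z f1_le_iff by simp
  then have "(t - a) * f1 a \<le> (t - a) * f1 z" using greater by (simp add: mult_left_mono)
  then show ?thesis using z by (simp add: algebra_simps)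
qed simp

lemma f1_large: assumes "1 \<le> s" shows "f1 s \<ge> c1 * s - c2"
proof -
  obtain z where z: "0 < z" "z < s" "f s - f 0 = s * f1 z" using mvt_real[OF _ d1, of 0 s] assms by auto
  have "f1 z \<le> f1 s" using z f1_le_iff by simp
  have "s powr 2 \<le> s powr p" using assms p2 by (intro powr_mono) auto
  then have "c1 * s^2 \<le> c1 * \<bar>s\<bar> powr p" using assms c1 by (simp add: powr_numeral)
  moreover have "s * f1 z \<le> s * f1 s" using \<open>f1 z \<le> f1 s\<close> assms by (simp add: mult_left_mono)
  ultimately have "c1 * s^2 - c2 \<le> s * f1 s"
    using growl[of s] f0_le z by linarith
  then have "c1 * s - c2 / s \<le> f1 s" using assms
    by (simp add: field_simps power2_eq_square)
  moreover have "c2 / s \<le> c2" 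
    using assms f0_le f_nonneg[of 0] by (simp add: divide_le_eq mult_le_cancel_left1 order_trans)
  ultimately show ?thesis by simp
qed

lemma f1_small: assumes "1 \<le> s" shows "f1 (-s) \<le> -(c1 * s - c2)"
proof -
  obtain z where z: "-s < z" "z < 0" "f 0 - f (-s) = s * f1 z" using mvt_real[OF _ d1, of "-s" 0] assms by auto
  have "f1 (-s) \<le> f1 z" using z f1_le_iff by simp
  have "s powr 2 \<le> s powr p" using assms p2 by (intro powr_mono) auto
  then have "c1 * s^2 \<le> c1 * \<bar>-s\<bar> powr p" using assms c1 by (simp add: powr_numeral)
  moreover have "s * f1 (-s) \<le> s * f1 z" using \<open>f1 (-s) \<le> f1 z\<close> assms by (simp add: mult_left_mono)
  ultimately have "c1 * s^2 - c2 \<le> - s * f1 (-s)"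
    using growl[of "-s"] f0_le z by linarith
  then have "c1 * s - c2 / s \<le> - f1 (-s)" using assms
    by (simp add: field_simps power2_eq_square)
  moreover have "c2 / s \<le> c2" 
    using assms f0_le f_nonneg[of 0] by (simp add: divide_le_eq mult_le_cancel_left1 order_trans)
  ultimately show ?thesis by simp
qed

definition "bnd \<sigma> = max 1 ((\<bar>\<sigma>\<bar> + c2) / c1)"

lemma bnd_ge: "f1 (bnd \<sigma>) \<ge> \<bar>\<sigma>\<bar>" "f1 (- bnd \<sigma>) \<le> - \<bar>\<sigma>\<bar>"
proof -
  have b1: "1 \<le> bnd \<sigma>" "(\<bar>\<sigma>\<bar> + c2) / c1 \<le> bnd \<sigma>" unfolding bnd_def by auto
  then have b: "1 \<le> bnd \<sigma>" "c1 * bnd \<sigma> \<ge> \<bar>\<sigma>\<bar> + c2" using c1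
    by (auto simp: pos_divide_le_eq mult.commute)
  show "f1 (bnd \<sigma>) \<ge> \<bar>\<sigma>\<bar>" using f1_large[OF b(1)] b(2) by simp
  show "f1 (- bnd \<sigma>) \<le> - \<bar>\<sigma>\<bar>" using f1_small[OF b(1)] b(2) by simp
qed

lemma ex1_inv: "\<exists>!t. f1 t = \<sigma>"
proof -
  have c: "continuous_on {- bnd \<sigma> .. bnd \<sigma>} f1" 
    using f1_cont by (simp add: continuous_at_imp_continuous_on)
  have b: "- bnd \<sigma> \<le> bnd \<sigma>" unfolding bnd_def by auto
  have l: "f1 (- bnd \<sigma>) \<le> \<sigma>" "\<sigma> \<le> f1 (bnd \<sigma>)" using bnd_ge[of \<sigma>] by linarith+
  obtain t where t: "f1 t = \<sigma>" using IVT'[of f1 "- bnd \<sigma>" \<sigma> "bnd \<sigma>", OF l b c] by blast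
  show ?thesis
  proof (rule ex1I[of _ t])
    show "f1 t = \<sigma>" by (rule t)
    show "\<And>u. f1 u = \<sigma> \<Longrightarrow> u = t" using t f1_eq_iff by metis
  qed
qed

definition "psi \<sigma> = (THE t. f1 t = \<sigma>)"

lemma f1_psi[simp]: "f1 (psi \<sigma>) = \<sigma>"
  unfolding psi_def by (rule theI') (rule ex1_inv)

lemma psi_f1[simp]: "psi (f1 t) = t"
  using f1_psi[of "f1 t"] f1_eq_iff by metis

lemma psi_le_iff: "psi a \<le> psi b \<longleftrightarrow> a \<le> b"
  by (metis f1_le_iff f1_psi)

lemma psi_less_iff: "psi a < psi b \<longleftrightarrow> a < b"
  by (metis f1_less_iff f1_psi)

lemma psi_0[simp]: "psi 0 = 0" using psi_f1[of 0] f1_0 by simp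

lemma psi_bnd: "\<bar>psi \<sigma>\<bar> \<le> bnd \<sigma>"
proof -
  have "f1 (psi \<sigma>) \<le> f1 (bnd \<sigma>)" "f1 (- bnd \<sigma>) \<le> f1 (psi \<sigma>)" using bnd_ge[of \<sigma>] by auto
  then show ?thesis unfolding f1_le_iff by linarith
qed

lemma psi_nonneg: "0 \<le> \<sigma> \<Longrightarrow> 0 \<le> psi \<sigma>" using psi_le_iff[of 0 \<sigma>] by simp
lemma psi_nonpos: "\<sigma> \<le> 0 \<Longrightarrow> psi \<sigma> \<le> 0" using psi_le_iff[of \<sigma> 0] by simp

lemma psi_cont: "isCont psi \<sigma>"
proof -
  have "isCont psi (f1 (psi \<sigma>))"
    by (rule isCont_inverse_function[where d=1]) (auto intro: f1_cont)
  then show ?thesis by simp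
qed

lemma psi_deriv: "(psi has_real_derivative (1 / f2 (psi \<sigma>))) (at \<sigma>)"
proof -
  have "(psi has_real_derivative inverse (f2 (psi \<sigma>))) (at \<sigma>)"
    by (rule DERIV_inverse_function[where a="\<sigma> - 1" and b="\<sigma> + 1" and f=f1])
       (auto intro: d2 psi_cont simp: less_imp_neq[OF pos, symmetric])
  then show ?thesis by (simp add: inverse_eq_divide)
qed

definition "dpsi \<sigma> = 1 / f2 (psi \<sigma>)"

lemma dpsi_pos: "dpsi \<sigma> > 0" unfolding dpsi_def using pos by simp

lemma dpsi_cont: "isCont dpsi \<sigma>"
  unfolding dpsi_def using pos[of "psi \<sigma>"]
  by (intro continuous_intros isCont_o2[OF psi_cont f2_cont]) auto

lemma dpsi_mono_pos: "0 \<le> a \<Longrightarrow> a \<le> b \<Longrightarrow> dpsi b \<le> dpsi a"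
  unfolding dpsi_def using monop[of "psi a" "psi b"] psi_nonneg[of a] psi_le_iff[of a b] pos
  by (simp add: frac_le)

lemma dpsi_mono_neg: "a \<le> b \<Longrightarrow> b \<le> 0 \<Longrightarrow> dpsi a \<le> dpsi b"
  unfolding dpsi_def using monon[of "psi a" "psi b"] psi_nonpos[of b] psi_le_iff[of a b] pos
  by (simp add: frac_le)

lemma dpsi_le0: "dpsi a \<le> dpsi 0"
  by (cases "0 \<le> a") (auto intro: dpsi_mono_pos dpsi_mono_neg)

lemma psi_large: assumes "0 < T" "c2 * (1 + (2*T) powr p) / T \<le> \<sigma>" shows "T \<le> psi \<sigma>"
proof (rule ccontr)
  assume "\<not> T \<le> psi \<sigma>"
  then have "\<sigma> < f1 T" using f1_less_iff[of "psi \<sigma>" T] by simp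
  obtain z where z: "T < z" "z < 2*T" "f (2*T) - f T = (2*T - T) * f1 z" 
    using mvt_real[OF _ d1, of T "2*T"] assms by auto
  have "f1 T \<le> f1 z" using z f1_le_iff by simp
  then have m: "T * f1 T \<le> T * f1 z" using assms by (simp add: mult_left_mono)
  have "T * f1 T \<le> f (2*T)" using z(3) f_nonneg[of T] m by simp
  also have "\<dots> \<le> c2 * (1 + (2*T) powr p)" using growu[of "2*T"] assms by simp
  finally have "f1 T \<le> c2 * (1 + (2*T) powr p) / T" using assms by (simp add: field_simps)
  then show False using \<open>\<sigma> < f1 T\<close> assms by simp
qed

lemma psi_small: assumes "0 < T" "\<sigma> \<le> - (c2 * (1 + (2*T) powr p) / T)" shows "psi \<sigma> \<le> -T"
proof (rule ccontr)
  assume "\<not> psi \<sigma> \<le> -T"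
  then have "f1 (-T) < \<sigma>" using f1_less_iff[of "-T" "psi \<sigma>"] by simp
  obtain z where z: "-2*T < z" "z < -T" "f (-T) - f (-2*T) = (-T - -2*T) * f1 z" 
    using mvt_real[OF _ d1, of "-2*T" "-T"] assms by auto
  have "f1 z \<le> f1 (-T)" using z f1_le_iff by simp
  then have m: "T * f1 z \<le> T * f1 (-T)" using assms by (simp add: mult_left_mono)
  have "- T * f1 (-T) \<le> f (-2*T)" using z(3) f_nonneg[of "-T"] m by simp
  also have "\<dots> \<le> c2 * (1 + (2*T) powr p)" using growu[of "-2*T"] assms by simp
  finally have "- f1 (-T) \<le> c2 * (1 + (2*T) powr p) / T" using assms by (simp add: field_simps)
  then show False using \<open>f1 (-T) < \<sigma>\<close> assms by simp
qed


lemma psi_deriv': "(psi has_real_derivative dpsi \<sigma>) (at \<sigma>)"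
  unfolding dpsi_def by (rule psi_deriv)

lemma psi_mvt:
  assumes "a < b"
  shows "\<exists>\<tau>. a < \<tau> \<and> \<tau> < b \<and> psi b - psi a = (b - a) * dpsi \<tau>"
  by (rule mvt_real[OF assms psi_deriv'])

definition "dq \<sigma> h = (if h = 0 then dpsi \<sigma> else (psi (\<sigma> + h) - psi \<sigma>) / h)"

lemma dq_mvt: "\<exists>\<tau>. min \<sigma> (\<sigma> + h) \<le> \<tau> \<and> \<tau> \<le> max \<sigma> (\<sigma> + h) \<and> dq \<sigma> h = dpsi \<tau>"
proof (cases h "0::real" rule: linorder_cases)
  case less
  obtain \<tau> where t: "\<sigma> + h < \<tau>" "\<tau> < \<sigma>" "psi \<sigma> - psi (\<sigma> + h) = (\<sigma> - (\<sigma> + h)) * dpsi \<tau>"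
    using psi_mvt[of "\<sigma> + h" \<sigma>] less by auto
  then have "dq \<sigma> h = dpsi \<tau>" using less unfolding dq_def by (auto simp: field_simps)
  then show ?thesis using t less by (intro exI[of _ \<tau>]) auto
next
  case greater
  obtain \<tau> where t: "\<sigma> < \<tau>" "\<tau> < \<sigma> + h" "psi (\<sigma> + h) - psi \<sigma> = ((\<sigma> + h) - \<sigma>) * dpsi \<tau>"
    using psi_mvt[of \<sigma> "\<sigma> + h"] greater by auto
  then have "dq \<sigma> h = dpsi \<tau>" using greater unfolding dq_def by (auto simp: field_simps)
  then show ?thesis using t greater by (intro exI[of _ \<tau>]) auto
qed (auto simp: dq_def)

lemma dq_pos: "0 < dq \<sigma> h"
  using dq_mvt[of \<sigma> h] dpsi_pos by auto

lemma dq_cont: "isCont (dq \<sigma>) 0"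
proof -
  have "((\<lambda>h. (psi (\<sigma> + h) - psi \<sigma>) / h) \<longlongrightarrow> dpsi \<sigma>) (at 0)"
    using psi_deriv'[of \<sigma>] by (simp add: DERIV_def)
  moreover have "\<forall>\<^sub>F h in at 0. (psi (\<sigma> + h) - psi \<sigma>) / h = dq \<sigma> h"
    by (simp add: eventually_at_filter dq_def)
  ultimately have "(dq \<sigma> \<longlongrightarrow> dpsi \<sigma>) (at 0)" using tendsto_cong by fastforce
  then show ?thesis unfolding isCont_def by (simp add: dq_def)
qed

lemma dq_bound_0: "dq 0 h \<le> dpsi 0"
  using dq_mvt[of 0 h] dpsi_le0 by auto

lemma dq_bound_pos:
  assumes "0 < \<sigma>" "\<bar>h\<bar> \<le> \<sigma> / 2"
  shows "dq \<sigma> h \<le> 4 * (psi (\<sigma>/2) - psi (\<sigma>/4)) / \<sigma>"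
proof -
  obtain \<tau> where t: "min \<sigma> (\<sigma> + h) \<le> \<tau>" "dq \<sigma> h = dpsi \<tau>" using dq_mvt by blast
  have t2: "\<sigma>/2 \<le> \<tau>" using t assms by auto
  obtain \<tau>' where t': "\<sigma>/4 < \<tau>'" "\<tau>' < \<sigma>/2" "psi (\<sigma>/2) - psi (\<sigma>/4) = (\<sigma>/2 - \<sigma>/4) * dpsi \<tau>'"
    using psi_mvt[of "\<sigma>/4" "\<sigma>/2"] assms by auto
  have "dpsi \<tau> \<le> dpsi \<tau>'" using t' t2 assms by (intro dpsi_mono_pos) auto
  moreover have "4 * (psi (\<sigma>/2) - psi (\<sigma>/4)) / \<sigma> = dpsi \<tau>'" using t'(3) assms by (simp add: field_simps)
  ultimately show ?thesis using t by simp
qed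

lemma dq_bound_neg:
  assumes "\<sigma> < 0" "\<bar>h\<bar> \<le> - \<sigma> / 2"
  shows "dq \<sigma> h \<le> 4 * (psi (\<sigma>/4) - psi (\<sigma>/2)) / (- \<sigma>)"
proof -
  obtain \<tau> where t: "\<tau> \<le> max \<sigma> (\<sigma> + h)" "dq \<sigma> h = dpsi \<tau>" using dq_mvt by blast
  have t2: "\<tau> \<le> \<sigma>/2" using t assms by auto
  obtain \<tau>' where t': "\<sigma>/2 < \<tau>'" "\<tau>' < \<sigma>/4" "psi (\<sigma>/4) - psi (\<sigma>/2) = (\<sigma>/4 - \<sigma>/2) * dpsi \<tau>'"
    using psi_mvt[of "\<sigma>/2" "\<sigma>/4"] assms by auto
  have "dpsi \<tau> \<le> dpsi \<tau>'" using t' t2 assms by (intro dpsi_mono_neg) auto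
  moreover have "4 * (psi (\<sigma>/4) - psi (\<sigma>/2)) / (- \<sigma>) = dpsi \<tau>'" using t'(3) assms by (simp add: field_simps)
  ultimately show ?thesis using t by simp
qed

end

lemma floor_approx:
  fixes x :: real
  shows "(\<lambda>n. real_of_int \<lfloor>real (Suc n) * x\<rfloor> / real (Suc n)) \<longlonglongrightarrow> x"
proof (rule tendsto_sandwich[where f="\<lambda>n. x + - inverse (real (Suc n))" and h="\<lambda>n. x"])
  show "\<forall>\<^sub>F n in sequentially. x + - inverse (real (Suc n)) \<le> real_of_int \<lfloor>real (Suc n) * x\<rfloor> / real (Suc n)"
  proof (intro always_eventually allI)
    fix n
    have "real (Suc n) * x - 1 \<le> real_of_int \<lfloor>real (Suc n) * x\<rfloor>" by linarith
    then have "(real (Suc n) * x - 1) / real (Suc n) \<le> real_of_int \<lfloor>real (Suc n) * x\<rfloor> / real (Suc n)"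
      by (rule divide_right_mono) simp
    moreover have "(real (Suc n) * x - 1) / real (Suc n) = x + - inverse (real (Suc n))"
      by (simp add: field_simps del: of_nat_Suc)
    ultimately show "x + - inverse (real (Suc n)) \<le> real_of_int \<lfloor>real (Suc n) * x\<rfloor> / real (Suc n)"
      by simp
  qed
  show "\<forall>\<^sub>F n in sequentially. real_of_int \<lfloor>real (Suc n) * x\<rfloor> / real (Suc n) \<le> x"
  proof (intro always_eventually allI)
    fix n
    have "real_of_int \<lfloor>real (Suc n) * x\<rfloor> \<le> real (Suc n) * x" by linarith
    then show "real_of_int \<lfloor>real (Suc n) * x\<rfloor> / real (Suc n) \<le> x"
      by (simp add: field_simps)
  qed
  show "(\<lambda>n. x + - inverse (real (Suc n))) \<longlonglongrightarrow> x" by (rule LIMSEQ_inverse_real_of_nat_add_minus)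
qed simp

lemma caratheodory_measurable:
  fixes g :: "'a \<Rightarrow> real \<Rightarrow> real"
  assumes g: "\<And>t. (\<lambda>y. g y t) \<in> borel_measurable M" and c: "\<And>y t. isCont (g y) t"
    and u: "u \<in> borel_measurable M"
  shows "(\<lambda>y. g y (u y)) \<in> borel_measurable M"
proof (rule borel_measurable_LIMSEQ_real)
  fix y
  show "(\<lambda>n. g y (real_of_int \<lfloor>real (Suc n) * u y\<rfloor> / real (Suc n))) \<longlonglongrightarrow> g y (u y)"
    by (rule isCont_tendsto_compose[OF c floor_approx])
next
  fix n
  have fl: "(\<lambda>y. \<lfloor>real (Suc n) * u y\<rfloor>) \<in> measurable M (count_space UNIV)"
    using measurable_compose[OF borel_measurable_times[OF borel_measurable_const u] measurable_real_floor] 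
    by simp
  show "(\<lambda>y. g y (real_of_int \<lfloor>real (Suc n) * u y\<rfloor> / real (Suc n))) \<in> borel_measurable M"
    using measurable_compose_countable'[where f="\<lambda>k y. g y (real_of_int k / real (Suc n))", OF g fl]
    by simp
qed

lemma integral_isCont_dominated:
  fixes f :: "real \<Rightarrow> 'a \<Rightarrow> real"
  assumes meas: "\<And>h. f h \<in> borel_measurable M" and gi: "integrable M g"
    and r: "0 < r" and bnd: "AE x in M. \<forall>h. \<bar>h - h0\<bar> < r \<longrightarrow> \<bar>f h x\<bar> \<le> g x"
    and cont: "AE x in M. isCont (\<lambda>h. f h x) h0"
  shows "isCont (\<lambda>h. integral\<^sup>L M (f h)) h0"
proof (rule continuous_at_sequentiallyI)
  fix X :: "nat \<Rightarrow> real" assume X: "X \<longlonglongrightarrow> h0"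
  define Y where "Y n = (if \<bar>X n - h0\<bar> < r then X n else h0)" for n
  have ev: "\<forall>\<^sub>F n in sequentially. \<bar>X n - h0\<bar> < r"
    using X r unfolding tendsto_iff dist_real_def by auto
  then have evY: "\<forall>\<^sub>F n in sequentially. Y n = X n" by eventually_elim (simp add: Y_def)
  have Y: "(\<lambda>n. Y n) \<longlonglongrightarrow> h0" using tendsto_cong[OF evY, THEN iffD2, OF X] .
  have "(\<lambda>n. integral\<^sup>L M (f (Y n))) \<longlonglongrightarrow> integral\<^sup>L M (f h0)"
  proof (rule integral_dominated_convergence[where w=g])
    show "f h0 \<in> borel_measurable M" "\<And>n. f (Y n) \<in> borel_measurable M" by (rule meas)+
    show "integrable M g" by (rule gi)
    show "AE x in M. (\<lambda>n. f (Y n) x) \<longlonglongrightarrow> f h0 x"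
      using cont by eventually_elim (rule isCont_tendsto_compose[OF _ Y])
    show "AE x in M. norm (f (Y n) x) \<le> g x" for n
      using bnd by eventually_elim (auto simp: Y_def r)
  qed
  moreover have ev2: "\<forall>\<^sub>F n in sequentially. integral\<^sup>L M (f (Y n)) = integral\<^sup>L M (f (X n))"
    using evY by eventually_elim simp
  ultimately show "(\<lambda>n. integral\<^sup>L M (f (X n))) \<longlonglongrightarrow> integral\<^sup>L M (f h0)"
    using tendsto_cong[OF ev2, THEN iffD1] by blast
qed


lemma set_integrable_bounded:
  fixes f :: "real \<Rightarrow> real"
  assumes f: "f \<in> borel_measurable lborel" and B: "\<And>x. \<bar>f x\<bar> \<le> B"
    and S: "S \<in> sets lborel" "emeasure lborel S < \<infinity>"
  shows "set_integrable lborel S f"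
proof -
  have i: "integrable lborel (\<lambda>x. B * indicator S x :: real)" using S by simp
  have m: "(\<lambda>x. indicator S x *\<^sub>R f x) \<in> borel_measurable lborel" using f S by measurable
  have a: "AE x in lborel. norm (indicator S x *\<^sub>R f x) \<le> norm (B * indicator S x :: real)"
    using B by (auto simp: indicator_def abs_mult intro: order_trans[OF _ abs_ge_self])
  show ?thesis unfolding set_integrable_def by (rule Bochner_Integration.integrable_bound[OF i m a])
qed

lemma interval_integrable_bounded:
  fixes f :: "real \<Rightarrow> real"
  assumes f: "f \<in> borel_measurable lborel" and B: "\<And>x. \<bar>f x\<bar> \<le> B"
  shows "interval_lebesgue_integrable lborel (ereal a) (ereal b) f"
  unfolding interval_lebesgue_integrable_def
  by (auto intro!: set_integrable_bounded[OF f B])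

lemma interval_integrable_bounded3:
  fixes f :: "real \<Rightarrow> real"
  assumes f: "f \<in> borel_measurable lborel" and B: "\<And>x. \<bar>f x\<bar> \<le> B"
  shows "interval_lebesgue_integrable lborel (min (ereal a) (min (ereal b) (ereal c))) 
           (max (ereal a) (max (ereal b) (ereal c))) f"
  using interval_integrable_bounded[OF f B, of "min a (min b c)" "max a (max b c)"]
  by (simp del: ereal_min ereal_max add: ereal_min[symmetric] ereal_max[symmetric])

lemma LBINT_shift:
  fixes f :: "real \<Rightarrow> real"
  assumes per: "\<And>x. f (x + c) = f x" and ab: "a \<le> b"
  shows "(LBINT t=ereal (a + c)..ereal (b + c). f t) = (LBINT t=ereal a..ereal b. f t)"
proof -
  have "(LBINT t=ereal (a + c)..ereal (b + c). f t) = 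
      integral\<^sup>L lborel (\<lambda>x. indicator {a+c<..<b+c} x *\<^sub>R f x)"
    using ab by (simp add: interval_lebesgue_integral_def set_lebesgue_integral_def)
  also have "\<dots> = integral\<^sup>L lborel (\<lambda>x. indicator {a+c<..<b+c} (c + 1 * x) *\<^sub>R f (c + 1 * x))"
    using lborel_integral_real_affine[where c=1 and t=c] by simp
  also have "\<dots> = integral\<^sup>L lborel (\<lambda>x. indicator {a<..<b} x *\<^sub>R f x)"
    using per by (intro Bochner_Integration.integral_cong) (auto simp: indicator_def add.commute)
  also have "\<dots> = (LBINT t=ereal a..ereal b. f t)"
    using ab by (simp add: interval_lebesgue_integral_def set_lebesgue_integral_def)
  finally show ?thesis .
qed

lemma LBINT_period:
  fixes f :: "real \<Rightarrow> real"
  assumes per: "\<And>x (n::int). f (x + of_int n) = f x"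
    and f: "f \<in> borel_measurable lborel" and B: "\<And>x. \<bar>f x\<bar> \<le> B"
  shows "(LBINT t=ereal x..ereal (x + 1). f t) = (LBINT t=0..1. f t)"
proof -
  define s where "s = frac x"
  have s: "0 \<le> s" "s < 1" unfolding s_def by (auto simp: frac_lt_1)
  have x: "x = s + of_int \<lfloor>x\<rfloor>" unfolding s_def by (simp add: frac_def)
  have "(LBINT t=ereal x..ereal (x + 1). f t) = (LBINT t=ereal (s + of_int \<lfloor>x\<rfloor>)..ereal ((s + 1) + of_int \<lfloor>x\<rfloor>). f t)"
  proof -
    have "x + 1 = (s + 1) + of_int \<lfloor>x\<rfloor>" using x by simp
    then show ?thesis using x by metis
  qed
  also have "\<dots> = (LBINT t=ereal s..ereal (s + 1). f t)"
    by (rule LBINT_shift) (auto simp: per)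
  also have "\<dots> = (LBINT t=ereal s..ereal 1. f t) + (LBINT t=ereal 1..ereal (s + 1). f t)"
    by (rule interval_integral_sum[symmetric]) (rule interval_integrable_bounded3[OF f B])
  also have "(LBINT t=ereal 1..ereal (s + 1). f t) = (LBINT t=ereal (0 + 1)..ereal (s + 1). f t)" by simp
  also have "\<dots> = (LBINT t=ereal 0..ereal s. f t)"
    by (rule LBINT_shift) (auto simp: s per[of _ 1, simplified])
  also have "(LBINT t=ereal s..ereal 1. f t) + (LBINT t=ereal 0..ereal s. f t) = 
     (LBINT t=ereal 0..ereal s. f t) + (LBINT t=ereal s..ereal 1. f t)" by simp
  also have "\<dots> = (LBINT t=ereal 0..ereal 1. f t)"
    by (rule interval_integral_sum) (rule interval_integrable_bounded3[OF f B])
  finally show ?thesis by (simp add: zero_ereal_def one_ereal_def)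
qed


lemma LBINT_bound:
  fixes f :: "real \<Rightarrow> real"
  assumes f: "f \<in> borel_measurable lborel" and B: "\<And>x. \<bar>f x\<bar> \<le> B"
  shows "\<bar>LBINT t=ereal a..ereal b. f t\<bar> \<le> B * \<bar>b - a\<bar>"
proof -
  have gen: "\<bar>LINT t:{c<..<d}|lborel. f t\<bar> \<le> B * (d - c)" if "c \<le> d" for c d
  proof -
    have i: "set_integrable lborel {c<..<d} f" by (rule set_integrable_bounded[OF f B]) (use that in auto)
    have i2: "set_integrable lborel {c<..<d} (\<lambda>t. \<bar>f t\<bar>)"
      by (rule set_integrable_bounded[of _ B]) (use that f B in \<open>auto intro: borel_measurable_abs\<close>)
    have i3: "set_integrable lborel {c<..<d} (\<lambda>t. B)"
      by (rule set_integrable_bounded[of _ "\<bar>B\<bar>"]) (use that in auto)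
    have "\<bar>LINT t:{c<..<d}|lborel. f t\<bar> \<le> (LINT t:{c<..<d}|lborel. \<bar>f t\<bar>)"
      using set_integral_norm_bound[OF i] by simp
    also have "\<dots> \<le> (LINT t:{c<..<d}|lborel. B)"
      by (rule set_integral_mono[OF i2 i3]) (rule B)
    also have "\<dots> = B * (d - c)" using that by (simp add: set_integral_const)
    finally show ?thesis .
  qed
  show ?thesis
  proof (cases "a \<le> b")
    case True then show ?thesis using gen[of a b] by (simp add: interval_lebesgue_integral_def)
  next
    case False then show ?thesis using gen[of b a] by (simp add: interval_lebesgue_integral_def)
  qed
qed

lemma prim_lipschitz:
  fixes f :: "real \<Rightarrow> real"
  assumes f: "f \<in> borel_measurable lborel" and B: "\<And>x. \<bar>f x\<bar> \<le> B"
  shows "continuous_on UNIV (\<lambda>x. LBINT t=ereal c..ereal x. f t)"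
proof -
  have B0: "0 \<le> B" using B[of 0] by simp
  have "B-lipschitz_on UNIV (\<lambda>x. LBINT t=ereal c..ereal x. f t)"
  proof (rule lipschitz_onI)
    fix x y :: real
    have "(LBINT t=ereal c..ereal y. f t) + (LBINT t=ereal y..ereal x. f t) = (LBINT t=ereal c..ereal x. f t)"
      by (rule interval_integral_sum) (rule interval_integrable_bounded3[OF f B])
    then have "dist (LBINT t=ereal c..ereal x. f t) (LBINT t=ereal c..ereal y. f t) = \<bar>LBINT t=ereal y..ereal x. f t\<bar>"
      by (simp add: dist_real_def)
    also have "\<dots> \<le> B * \<bar>x - y\<bar>" by (rule LBINT_bound[OF f B])
    finally show "dist (LBINT t=ereal c..ereal x. f t) (LBINT t=ereal c..ereal y. f t) \<le> B * dist x y"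
      by (simp add: dist_real_def)
  qed (rule B0)
  then show ?thesis by (rule lipschitz_on_continuous_on)
qed


lemma deriv_measurable:
  fixes g :: "'a \<Rightarrow> real \<Rightarrow> real"
  assumes g: "\<And>t. (\<lambda>y. g y t) \<in> borel_measurable M"
    and d: "\<And>y. (g y has_real_derivative g' y) (at t)"
  shows "g' \<in> borel_measurable M"
proof (rule borel_measurable_LIMSEQ_real)
  fix y
  have "((\<lambda>h. (g y (t + h) - g y t) / h) \<longlongrightarrow> g' y) (at 0)"
    using d[of y] by (simp add: DERIV_def)
  then have "\<forall>X. (\<forall>i. X i \<in> UNIV - {0}) \<longrightarrow> X \<longlonglongrightarrow> 0 \<longrightarrow> 
      ((\<lambda>h. (g y (t + h) - g y t) / h) \<circ> X) \<longlonglongrightarrow> g' y"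
    unfolding tendsto_at_iff_sequentially .
  from this[rule_format, of "\<lambda>n. inverse (real (Suc n))"]
  have "((\<lambda>h. (g y (t + h) - g y t) / h) \<circ> (\<lambda>n. inverse (real (Suc n)))) \<longlonglongrightarrow> g' y"
    using LIMSEQ_inverse_real_of_nat by simp
  then show "(\<lambda>n. (g y (t + inverse (real (Suc n))) - g y t) / inverse (real (Suc n))) \<longlonglongrightarrow> g' y"
    by (simp add: comp_def)
next
  fix n
  show "(\<lambda>y. (g y (t + inverse (real (Suc n))) - g y t) / inverse (real (Suc n))) \<in> borel_measurable M"
    using g by measurable
qed

locale dens =
  fixes p :: real and W :: "real \<Rightarrow> real \<Rightarrow> real" and c1 c2 :: real
  assumes p2: "2 \<le> p" and c1: "0 < c1"
    and measW: "\<And>\<xi>. (\<lambda>y. W y \<xi>) \<in> borel_measurable lborel"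
    and d1: "\<And>y x. (W y has_real_derivative deriv (W y) x) (at x)"
    and d2: "\<And>y x. (deriv (W y) has_real_derivative deriv (deriv (W y)) x) (at x)"
    and f2c: "\<And>y x. isCont (deriv (deriv (W y))) x"
    and growl: "\<And>y x. c1 * \<bar>x\<bar> powr p \<le> W y x"
    and growu: "\<And>y x. W y x \<le> c2 * (1 + \<bar>x\<bar> powr p)"
    and ae: "AE y in lborel. y \<in> {0<..<1} \<longrightarrow> (\<forall>\<xi>. deriv (deriv (W y)) \<xi> > 0) \<and>
           (\<forall>\<xi>. W y 0 \<le> W y \<xi>) \<and>
           (\<forall>a b. 0 \<le> a \<longrightarrow> a \<le> b \<longrightarrow> deriv (deriv (W y)) a \<le> deriv (deriv (W y)) b) \<and>
           (\<forall>a b. a \<le> b \<longrightarrow> b \<le> 0 \<longrightarrow> deriv (deriv (W y)) b \<le> deriv (deriv (W y)) a)"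
begin

definition "good y \<longleftrightarrow> onedim (W y) p c1 c2"

lemma ae_good: "AE y in lborel. y \<in> {0<..<1} \<longrightarrow> good y"
  using ae
proof eventually_elim
  case (elim y)
  show ?case
  proof
    assume "y \<in> {0<..<1}"
    then have e: "(\<forall>\<xi>. deriv (deriv (W y)) \<xi> > 0)" "(\<forall>\<xi>. W y 0 \<le> W y \<xi>)"
           "(\<forall>a b. 0 \<le> a \<longrightarrow> a \<le> b \<longrightarrow> deriv (deriv (W y)) a \<le> deriv (deriv (W y)) b)"
           "(\<forall>a b. a \<le> b \<longrightarrow> b \<le> 0 \<longrightarrow> deriv (deriv (W y)) b \<le> deriv (deriv (W y)) a)"
      using elim by blast+
    show "good y" unfolding good_def
    proof (rule onedim.intro[OF p2 c1 d1 d2 f2c])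
      show "\<And>x. 0 < deriv (deriv (W y)) x" using e(1) by blast
      show "\<And>x. c1 * \<bar>x\<bar> powr p \<le> W y x" by (rule growl)
      show "\<And>x. W y x \<le> c2 * (1 + \<bar>x\<bar> powr p)" by (rule growu)
      show "\<And>x. W y 0 \<le> W y x" using e(2) by blast
      show "\<And>a b. 0 \<le> a \<Longrightarrow> a \<le> b \<Longrightarrow> deriv (deriv (W y)) a \<le> deriv (deriv (W y)) b" using e(3) by blast
      show "\<And>a b. a \<le> b \<Longrightarrow> b \<le> 0 \<Longrightarrow> deriv (deriv (W y)) b \<le> deriv (deriv (W y)) a" using e(4) by blast
    qed
  qed
qed

definition "NN = (SOME N. N \<in> null_sets lborel \<and> {y \<in> space lborel. \<not> (y \<in> {0<..<1} \<longrightarrow> good y)} \<subseteq> N)"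

lemma NN: "NN \<in> null_sets lborel" "{y \<in> space lborel. \<not> (y \<in> {0<..<1} \<longrightarrow> good y)} \<subseteq> NN"
proof -
  from ae_good obtain N where N: "{y \<in> space lborel. \<not> (y \<in> {0<..<1} \<longrightarrow> good y)} \<subseteq> N"
      "emeasure lborel N = 0" "N \<in> sets lborel"
    by (rule AE_E)
  then have "N \<in> null_sets lborel" by (simp add: null_sets_def)
  then have "\<exists>N. N \<in> null_sets lborel \<and> {y \<in> space lborel. \<not> (y \<in> {0<..<1} \<longrightarrow> good y)} \<subseteq> N" using N(1) by blast
  from someI_ex[OF this] show "NN \<in> null_sets lborel" "{y \<in> space lborel. \<not> (y \<in> {0<..<1} \<longrightarrow> good y)} \<subseteq> NN"
    unfolding NN_def by blast+
qed

definition "Gd = {0<..<1} - NN"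

lemma Gd_sets[measurable]: "Gd \<in> sets borel"
proof -
  have "NN \<in> sets borel" using null_setsD2[OF NN(1)] by simp
  then show ?thesis unfolding Gd_def by (rule sets.Diff[rotated]) simp
qed

lemma Gd_good: "y \<in> Gd \<Longrightarrow> good y"
  using NN(2) unfolding Gd_def by auto

lemma Gd_sub: "y \<in> Gd \<Longrightarrow> y \<in> {0<..<1}"
  unfolding Gd_def by auto

abbreviation "M \<equiv> restrict_space lborel {0..1::real}"

lemma sets_M: "{0..1::real} \<inter> space lborel \<in> sets lborel" by simp

lemma AE_Gd: "AE y in M. y \<in> Gd"
proof -
  have "AE y in lborel. y \<notin> NN" using NN(1) by (rule AE_not_in)
  moreover have "AE y in lborel. y \<noteq> 0" "AE y in lborel. y \<noteq> 1" by (rule AE_lborel_singleton)+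
  ultimately have "AE y in lborel. y \<in> {0..1} \<longrightarrow> y \<in> Gd"
  proof eventually_elim
    case (elim y) then show ?case unfolding Gd_def by auto
  qed
  then show ?thesis using AE_restrict_space_iff[OF sets_M] by blast
qed

lemma AE_M_lborel: 
  assumes "AE y in lborel. y \<in> {0<..<1} \<longrightarrow> P y"
  shows "AE y in M. P y"
proof -
  have "AE y in lborel. y \<in> {0..1} \<longrightarrow> (y \<in> {0<..<1} \<longrightarrow> P y)"
    using assms by eventually_elim blast
  then have "AE y in M. y \<in> {0<..<1} \<longrightarrow> P y"
    using AE_restrict_space_iff[OF sets_M] by blast
  with AE_Gd show ?thesis
  proof eventually_elim
    case (elim y) then show ?case using Gd_sub by blast
  qed
qed

lemma finM: "finite_measure M"
proof (rule finite_measureI)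
  have "emeasure M (space M) = emeasure lborel {0..1::real}"
    by (subst emeasure_restrict_space) auto
  then show "emeasure M (space M) \<noteq> \<infinity>" by simp
qed

lemma measure_M: "measure M (space M) = 1"
proof -
  have "emeasure M (space M) = emeasure lborel {0..1::real}"
    by (subst emeasure_restrict_space) auto
  then show ?thesis by (simp add: measure_def)
qed

lemma LBINT_M: "(LBINT y=0..1. f y) = integral\<^sup>L M f"
proof -
  have "(LBINT y=0..1. f y) = (LBINT y=ereal 0..ereal 1. f y)" by (simp only: zero_ereal_def one_ereal_def)
  also have "\<dots> = (LBINT y:{0..1}. f y)" by (rule interval_integral_Icc) simp
  also have "\<dots> = integral\<^sup>L M f" unfolding set_lebesgue_integral_def
    by (rule integral_restrict_space[symmetric]) simp
  finally show ?thesis .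
qed

lemma meas_M: "f \<in> borel_measurable lborel \<Longrightarrow> f \<in> borel_measurable M"
  by (rule measurable_restrict_space1)

lemma meas_d1: "(\<lambda>y. deriv (W y) t) \<in> borel_measurable lborel"
  by (rule deriv_measurable[OF measW d1])

lemma meas_d2: "(\<lambda>y. deriv (deriv (W y)) t) \<in> borel_measurable lborel"
  by (rule deriv_measurable[OF meas_d1 d2])

lemma W_cont: "isCont (W y) x" using d1 DERIV_isCont by blast

lemma meas_Wcomp: "u \<in> borel_measurable lborel \<Longrightarrow> (\<lambda>y. W y (u y)) \<in> borel_measurable lborel"
  by (rule caratheodory_measurable[OF measW W_cont])

lemma meas_d2comp: "u \<in> borel_measurable lborel \<Longrightarrow> (\<lambda>y. deriv (deriv (W y)) (u y)) \<in> borel_measurable lborel"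
  by (rule caratheodory_measurable[OF meas_d2 f2c])

definition "ps y \<sigma> = (if y \<in> Gd then recip_psi W y \<sigma> else 0)"
definition "dps y \<sigma> = (if y \<in> Gd then 1 / deriv (deriv (W y)) (recip_psi W y \<sigma>) else 0)"
definition "dqs y \<sigma> h = (if h = 0 then dps y \<sigma> else (ps y (\<sigma> + h) - ps y \<sigma>) / h)"
definition "bnd \<sigma> = max 1 ((\<bar>\<sigma>\<bar> + c2) / c1)"

lemma psi_eq: assumes "y \<in> Gd" shows "recip_psi W y \<sigma> = onedim.psi (W y) \<sigma>"
proof -
  interpret o: onedim "W y" p c1 c2 using Gd_good[OF assms] unfolding good_def .
  show ?thesis unfolding recip_psi_def o.psi_def by (rule refl)
qed

lemma ps_Gd: "y \<in> Gd \<Longrightarrow> ps y \<sigma> = onedim.psi (W y) \<sigma>"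
  unfolding ps_def by (simp only: psi_eq if_True)

lemma dps_Gd: "y \<in> Gd \<Longrightarrow> dps y \<sigma> = onedim.dpsi (W y) \<sigma>"
proof -
  assume y: "y \<in> Gd"
  interpret o: onedim "W y" p c1 c2 using Gd_good[OF y] unfolding good_def .
  show ?thesis unfolding dps_def o.dpsi_def by (simp only: psi_eq[OF y] y if_True)
qed

lemma dqs_Gd: "y \<in> Gd \<Longrightarrow> dqs y \<sigma> h = onedim.dq (W y) \<sigma> h"
proof -
  assume y: "y \<in> Gd"
  interpret o: onedim "W y" p c1 c2 using Gd_good[OF y] unfolding good_def .
  show ?thesis unfolding dqs_def o.dq_def by (simp only: ps_Gd[OF y] dps_Gd[OF y])
qed

lemma ps_bnd: "\<bar>ps y \<sigma>\<bar> \<le> bnd \<sigma>"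
proof (cases "y \<in> Gd")
  case True
  interpret o: onedim "W y" p c1 c2 using Gd_good[OF True] unfolding good_def .
  have "o.bnd \<sigma> = bnd \<sigma>" unfolding o.bnd_def bnd_def by (rule refl)
  moreover have "\<bar>ps y \<sigma>\<bar> = \<bar>o.psi \<sigma>\<bar>" by (simp only: ps_Gd[OF True])
  ultimately show ?thesis using o.psi_bnd[of \<sigma>] by linarith
qed (simp add: ps_def bnd_def)

end

context dens begin

lemma bnd_mono: "\<bar>\<sigma>\<bar> \<le> \<bar>\<tau>\<bar> \<Longrightarrow> bnd \<sigma> \<le> bnd \<tau>"
proof -
  assume h: "\<bar>\<sigma>\<bar> \<le> \<bar>\<tau>\<bar>"
  have "(\<bar>\<sigma>\<bar> + c2) / c1 \<le> (\<bar>\<tau>\<bar> + c2) / c1" by (rule divide_right_mono) (use c1 h in auto)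
  then show ?thesis unfolding bnd_def by (intro max.mono) auto
qed

lemma meas_ps[measurable]: "(\<lambda>y. ps y \<sigma>) \<in> borel_measurable lborel"
proof (rule borel_measurable_iff_le[THEN iffD2], intro allI)
  fix w
  have eq: "{y \<in> space lborel. ps y \<sigma> \<le> w} = (Gd \<inter> {y \<in> space lborel. \<sigma> \<le> deriv (W y) w}) \<union> (- Gd \<inter> {y. 0 \<le> w})"
  proof (intro set_eqI iffI)
    fix y assume y: "y \<in> {y \<in> space lborel. ps y \<sigma> \<le> w}"
    show "y \<in> (Gd \<inter> {y \<in> space lborel. \<sigma> \<le> deriv (W y) w}) \<union> (- Gd \<inter> {y. 0 \<le> w})"
    proof (cases "y \<in> Gd")
      case True
      interpret o: onedim "W y" p c1 c2 using Gd_good[OF True] unfolding good_def .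
      have "o.psi \<sigma> \<le> w" using y by (simp add: ps_Gd[OF True])
      then have "deriv (W y) (o.psi \<sigma>) \<le> deriv (W y) w" using o.f1_le_iff by blast
      then show ?thesis using True by simp
    qed (use y in \<open>auto simp: ps_def split: if_splits\<close>)
  next
    fix y assume y: "y \<in> (Gd \<inter> {y \<in> space lborel. \<sigma> \<le> deriv (W y) w}) \<union> (- Gd \<inter> {y. 0 \<le> w})"
    show "y \<in> {y \<in> space lborel. ps y \<sigma> \<le> w}"
    proof (cases "y \<in> Gd")
      case True
      interpret o: onedim "W y" p c1 c2 using Gd_good[OF True] unfolding good_def .
      have "deriv (W y) (o.psi \<sigma>) \<le> deriv (W y) w" using y True by simp
      then have "o.psi \<sigma> \<le> w" using o.f1_le_iff by blast
      then show ?thesis using True by (simp add: ps_Gd[OF True])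
    qed (use y in \<open>auto simp: ps_def split: if_splits\<close>)
  qed
  have m: "{y \<in> space lborel. \<sigma> \<le> deriv (W y) w} \<in> sets lborel"
    using meas_d1[of w] by measurable
  show "{y \<in> space lborel. ps y \<sigma> \<le> w} \<in> sets lborel"
    unfolding eq using m by (auto intro!: sets.Un sets.Int sets.compl_sets)
qed

lemma meas_dps[measurable]: "(\<lambda>y. dps y \<sigma>) \<in> borel_measurable lborel"
proof -
  have "(\<lambda>y. dps y \<sigma>) = (\<lambda>y. if y \<in> Gd then 1 / deriv (deriv (W y)) (ps y \<sigma>) else 0)"
    by (auto simp: dps_def ps_def)
  moreover have "(\<lambda>y. deriv (deriv (W y)) (ps y \<sigma>)) \<in> borel_measurable lborel"
    by (rule meas_d2comp) measurable
  moreover have "Gd \<inter> space lborel \<in> sets lborel" by simp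
  ultimately show ?thesis by (auto intro!: measurable_If_set borel_measurable_divide)
qed

lemma meas_dqs[measurable]: "(\<lambda>y. dqs y \<sigma> h) \<in> borel_measurable lborel"
  unfolding dqs_def by measurable

lemma integrable_ps: "integrable M (\<lambda>y. ps y \<sigma>)"
proof -
  interpret finite_measure M by (rule finM)
  show ?thesis by (rule integrable_const_bound[where B="bnd \<sigma>"]) (auto intro: ps_bnd meas_M)
qed

definition "Phi \<sigma> = integral\<^sup>L M (\<lambda>y. ps y \<sigma>)"

lemma ps_nonGd: "y \<notin> Gd \<Longrightarrow> ps y \<sigma> = 0" by (simp add: ps_def)
lemma dps_nonGd: "y \<notin> Gd \<Longrightarrow> dps y \<sigma> = 0" by (simp add: dps_def)

lemma ps_0: "ps y 0 = 0"
proof (cases "y \<in> Gd")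
  case True
  interpret o: onedim "W y" p c1 c2 using Gd_good[OF True] unfolding good_def .
  show ?thesis using o.psi_0 ps_Gd[OF True, of 0] by simp
qed (simp add: ps_def)

lemma Phi_0: "Phi 0 = 0" unfolding Phi_def ps_0 by simp

lemma c2_nonneg: "0 \<le> c2"
proof -
  have "0 \<le> c1 * \<bar>0::real\<bar> powr p" using c1 by simp
  also have "\<dots> \<le> W 0 0" by (rule growl)
  also have "\<dots> \<le> c2 * (1 + \<bar>0::real\<bar> powr p)" by (rule growu)
  finally show ?thesis using p2 by simp
qed

lemma Phi_less: assumes "\<sigma> < \<tau>" shows "Phi \<sigma> < Phi \<tau>"
proof -
  interpret finite_measure M by (rule finM)
  have "AE y in M. ps y \<sigma> < ps y \<tau>"
    using AE_Gd
  proof eventually_elim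
    case (elim y)
    interpret o: onedim "W y" p c1 c2 using Gd_good[OF elim] unfolding good_def .
    have "o.psi \<sigma> < o.psi \<tau>" using o.psi_less_iff assms by simp
    then show ?case using ps_Gd[OF elim] by simp
  qed
  moreover have "emeasure M (space M) \<noteq> 0" using measure_M by (simp add: emeasure_eq_measure)
  ultimately show ?thesis unfolding Phi_def by (intro integral_less_AE_space integrable_ps)
qed

lemma Phi_le_iff: "Phi \<sigma> \<le> Phi \<tau> \<longleftrightarrow> \<sigma> \<le> \<tau>"
proof
  assume h: "Phi \<sigma> \<le> Phi \<tau>"
  show "\<sigma> \<le> \<tau>"
  proof (rule ccontr)
    assume "\<not> \<sigma> \<le> \<tau>"
    then have "\<tau> < \<sigma>" by simp
    then have "Phi \<tau> < Phi \<sigma>" by (rule Phi_less)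
    then show False using h by simp
  qed
next
  assume h: "\<sigma> \<le> \<tau>"
  show "Phi \<sigma> \<le> Phi \<tau>"
  proof (cases "\<sigma> = \<tau>")
    case False
    then have "\<sigma> < \<tau>" using h by simp
    then show ?thesis using Phi_less[of \<sigma> \<tau>] by simp
  qed simp
qed

lemma Phi_cont: "isCont Phi \<sigma>"
proof -
  interpret finite_measure M by (rule finM)
  have "isCont (\<lambda>h. integral\<^sup>L M (\<lambda>y. ps y h)) \<sigma>"
  proof (rule integral_isCont_dominated[where g="\<lambda>y. bnd (\<bar>\<sigma>\<bar> + 1)" and r=1])
    show "\<And>h. (\<lambda>y. ps y h) \<in> borel_measurable M" by (rule meas_M) (rule meas_ps)
    show "integrable M (\<lambda>y. bnd (\<bar>\<sigma>\<bar> + 1))" by (rule integrable_const_bound[where B="\<bar>bnd (\<bar>\<sigma>\<bar> + 1)\<bar>"]) auto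
    show "AE y in M. \<forall>h. \<bar>h - \<sigma>\<bar> < 1 \<longrightarrow> \<bar>ps y h\<bar> \<le> bnd (\<bar>\<sigma>\<bar> + 1)"
    proof (intro AE_I2 allI impI)
      fix y h assume "\<bar>h - \<sigma>\<bar> < 1"
      then have "\<bar>h\<bar> \<le> \<bar>\<bar>\<sigma>\<bar> + 1\<bar>" by linarith
      then show "\<bar>ps y h\<bar> \<le> bnd (\<bar>\<sigma>\<bar> + 1)" using ps_bnd[of y h] bnd_mono[of h "\<bar>\<sigma>\<bar> + 1"] by linarith
    qed
    show "AE y in M. isCont (\<lambda>h. ps y h) \<sigma>"
      using AE_Gd
    proof eventually_elim
      case (elim y)
      interpret o: onedim "W y" p c1 c2 using Gd_good[OF elim] unfolding good_def .
      have "(\<lambda>h. ps y h) = o.psi" using ps_Gd[OF elim] by (intro ext) simp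
      then show ?case using o.psi_cont by simp
    qed
  qed simp
  then show ?thesis unfolding Phi_def .
qed

definition "KK T = c2 * (1 + (2*T) powr p) / T"

lemma Phi_large: assumes "0 < T" shows "T \<le> Phi (KK T)"
proof -
  interpret finite_measure M by (rule finM)
  have "AE y in M. T \<le> ps y (KK T)"
    using AE_Gd
  proof eventually_elim
    case (elim y)
    interpret o: onedim "W y" p c1 c2 using Gd_good[OF elim] unfolding good_def .
    have "T \<le> o.psi (KK T)" by (rule o.psi_large[OF assms]) (simp add: KK_def)
    then show ?case using ps_Gd[OF elim] by simp
  qed
  then have "integral\<^sup>L M (\<lambda>y. T) \<le> integral\<^sup>L M (\<lambda>y. ps y (KK T))"
    by (intro integral_mono_AE integrable_ps) auto
  then show ?thesis unfolding Phi_def using measure_M by simp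
qed

lemma Phi_small: assumes "0 < T" shows "Phi (- KK T) \<le> - T"
proof -
  interpret finite_measure M by (rule finM)
  have "AE y in M. ps y (- KK T) \<le> - T"
    using AE_Gd
  proof eventually_elim
    case (elim y)
    interpret o: onedim "W y" p c1 c2 using Gd_good[OF elim] unfolding good_def .
    have "o.psi (- KK T) \<le> - T" by (rule o.psi_small[OF assms]) (simp add: KK_def)
    then show ?case using ps_Gd[OF elim] by simp
  qed
  then have "integral\<^sup>L M (\<lambda>y. ps y (- KK T)) \<le> integral\<^sup>L M (\<lambda>y. - T)"
    by (intro integral_mono_AE integrable_ps) auto
  then show ?thesis unfolding Phi_def using measure_M by simp
qed

lemma Phi_surj: "\<exists>\<sigma>. Phi \<sigma> = \<xi>"
proof -
  define T where "T = \<bar>\<xi>\<bar> + 1"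
  have T: "0 < T" unfolding T_def by simp
  have l: "Phi (- KK T) \<le> \<xi>" "\<xi> \<le> Phi (KK T)" 
    using Phi_large[OF T] Phi_small[OF T] unfolding T_def by linarith+
  have b: "- KK T \<le> KK T" using T c2_nonneg unfolding KK_def by simp
  have c: "continuous_on {- KK T .. KK T} Phi" using Phi_cont by (simp add: continuous_at_imp_continuous_on)
  show ?thesis using IVT'[OF l b c] by blast
qed

definition "sg \<xi> = (THE \<sigma>. Phi \<sigma> = \<xi>)"

lemma Phi_inj: "Phi a = Phi b \<Longrightarrow> a = b"
  by (simp add: order_eq_iff Phi_le_iff)

lemma Phi_sg: "Phi (sg \<xi>) = \<xi>"
proof -
  obtain \<sigma> where s: "Phi \<sigma> = \<xi>" using Phi_surj by blast
  have "\<exists>!\<sigma>. Phi \<sigma> = \<xi>" using s Phi_inj by (intro ex1I[of _ \<sigma>]) auto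
  then show ?thesis unfolding sg_def by (rule theI')
qed

lemma sg_Phi: "sg (Phi \<sigma>) = \<sigma>"
  using Phi_sg[of "Phi \<sigma>"] Phi_inj by simp

lemma sg_cont: "isCont sg \<xi>"
proof -
  have "isCont sg (Phi (sg \<xi>))"
    by (rule isCont_inverse_function[where d=1]) (auto simp: sg_Phi intro: Phi_cont)
  then show ?thesis by (simp add: Phi_sg)
qed

lemma sg_0: "sg 0 = 0" using sg_Phi[of 0] Phi_0 by simp

lemma sg_pos: "0 < \<xi> \<Longrightarrow> 0 < sg \<xi>"
  by (metis Phi_0 Phi_sg Phi_le_iff linorder_not_le)

lemma sg_neg: "\<xi> < 0 \<Longrightarrow> sg \<xi> < 0"
  by (metis Phi_0 Phi_sg Phi_le_iff linorder_not_le)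

end

lemma powr_sum_bound:
  fixes a b p :: real
  assumes "0 \<le> p"
  shows "\<bar>a + b\<bar> powr p \<le> 2 powr p * (\<bar>a\<bar> powr p + \<bar>b\<bar> powr p)"
proof -
  have "\<bar>a + b\<bar> \<le> 2 * max \<bar>a\<bar> \<bar>b\<bar>" by linarith
  then have "\<bar>a + b\<bar> powr p \<le> (2 * max \<bar>a\<bar> \<bar>b\<bar>) powr p" using powr_mono2[OF assms abs_ge_zero] by blast
  also have "\<dots> = 2 powr p * max \<bar>a\<bar> \<bar>b\<bar> powr p" by (simp add: powr_mult)
  also have "max \<bar>a\<bar> \<bar>b\<bar> powr p \<le> \<bar>a\<bar> powr p + \<bar>b\<bar> powr p"
    by (cases "\<bar>a\<bar> \<le> \<bar>b\<bar>") (auto simp: max_def)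
  then have "2 powr p * max \<bar>a\<bar> \<bar>b\<bar> powr p \<le> 2 powr p * (\<bar>a\<bar> powr p + \<bar>b\<bar> powr p)"
    by (rule mult_left_mono) simp
  finally show ?thesis .
qed

context dens begin

lemma set_int_M: "set_integrable lborel {0..1} f \<longleftrightarrow> integrable M (f :: real \<Rightarrow> real)"
  unfolding set_integrable_def using integrable_restrict_space[of "{0..1}" lborel f] by simp

lemma finM': "emeasure M (space M) < \<infinity>"
proof -
  have "emeasure M (space M) = emeasure lborel {0..1::real}"
    by (subst emeasure_restrict_space) auto
  then show ?thesis by simp
qed

lemma W_nonneg: "0 \<le> W y x"
proof -
  have "0 \<le> c1 * \<bar>x\<bar> powr p" using c1 by simp
  moreover have "c1 * \<bar>x\<bar> powr p \<le> W y x" by (rule growl)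
  ultimately show ?thesis by linarith
qed

definition "Gf \<sigma> = integral\<^sup>L M (\<lambda>y. W y (ps y \<sigma>))"
definition "Lf \<sigma> \<xi> = Gf \<sigma> + \<sigma> * (\<xi> - Phi \<sigma>)"

lemma meas_Wps: "(\<lambda>y. W y (ps y \<sigma>)) \<in> borel_measurable lborel"
  by (rule meas_Wcomp) (rule meas_ps)

lemma integrable_Wps: "integrable M (\<lambda>y. W y (ps y \<sigma>))"
proof -
  interpret finite_measure M by (rule finM)
  show ?thesis
  proof (rule integrable_const_bound[where B="c2 * (1 + bnd \<sigma> powr p)"])
    show "AE y in M. norm (W y (ps y \<sigma>)) \<le> c2 * (1 + bnd \<sigma> powr p)"
    proof (intro AE_I2)
      fix y
      have "\<bar>ps y \<sigma>\<bar> powr p \<le> bnd \<sigma> powr p" using ps_bnd[of y \<sigma>] p2 by (intro powr_mono2) auto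
      then have "c2 * (1 + \<bar>ps y \<sigma>\<bar> powr p) \<le> c2 * (1 + bnd \<sigma> powr p)"
        using c2_nonneg by (intro mult_left_mono) auto
      moreover have "W y (ps y \<sigma>) \<le> c2 * (1 + \<bar>ps y \<sigma>\<bar> powr p)" by (rule growu)
      ultimately show "norm (W y (ps y \<sigma>)) \<le> c2 * (1 + bnd \<sigma> powr p)"
        using W_nonneg[of y "ps y \<sigma>"] by simp
    qed
    show "(\<lambda>y. W y (ps y \<sigma>)) \<in> borel_measurable M" by (rule meas_M) (rule meas_Wps)
  qed
qed

lemma lower_bound:
  assumes w: "W1p_per p w w'"
  shows "Lf \<sigma> \<xi> \<le> (LBINT y=0..1. W y (\<xi> + w' y))"
proof -
  interpret finite_measure M by (rule finM)
  have mw': "w' \<in> borel_measurable lborel" and ipw: "set_integrable lborel {0..1} (\<lambda>y. \<bar>w' y\<bar> powr p)"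
    and iw: "set_integrable lborel {0..1} w'" and per: "w (0 + 1) = w 0"
    and rep: "w 1 = w 0 + (LBINT t=0..ereal 1. w' t)"
    using w unfolding W1p_per_def by blast+
  have "(LBINT t=0..1. w' t) = 0" using rep per by (simp add: one_ereal_def)
  then have int0: "integral\<^sup>L M w' = 0" by (simp add: LBINT_M)
  have iwM: "integrable M w'" using iw set_int_M by blast
  have ipM: "integrable M (\<lambda>y. \<bar>w' y\<bar> powr p)" using ipw set_int_M by blast
  have mWM: "(\<lambda>y. W y (\<xi> + w' y)) \<in> borel_measurable M"
    by (rule meas_M, rule meas_Wcomp) (use mw' in measurable)
  have iW: "integrable M (\<lambda>y. W y (\<xi> + w' y))"
  proof (rule Bochner_Integration.integrable_bound[OF _ mWM])
    show "integrable M (\<lambda>y. c2 * (1 + 2 powr p * (\<bar>\<xi>\<bar> powr p + \<bar>w' y\<bar> powr p)))"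
      using ipM by (auto intro!: integrable_mult_right Bochner_Integration.integrable_add)
    show "AE y in M. norm (W y (\<xi> + w' y)) \<le> norm (c2 * (1 + 2 powr p * (\<bar>\<xi>\<bar> powr p + \<bar>w' y\<bar> powr p)))"
    proof (intro AE_I2)
      fix y
      have "\<bar>\<xi> + w' y\<bar> powr p \<le> 2 powr p * (\<bar>\<xi>\<bar> powr p + \<bar>w' y\<bar> powr p)"
        using p2 by (intro powr_sum_bound) simp
      then have "c2 * (1 + \<bar>\<xi> + w' y\<bar> powr p) \<le> c2 * (1 + 2 powr p * (\<bar>\<xi>\<bar> powr p + \<bar>w' y\<bar> powr p))"
        using c2_nonneg by (intro mult_left_mono) auto
      moreover have "0 \<le> c2 * (1 + 2 powr p * (\<bar>\<xi>\<bar> powr p + \<bar>w' y\<bar> powr p))"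
        using c2_nonneg by simp
      moreover have "W y (\<xi> + w' y) \<le> c2 * (1 + \<bar>\<xi> + w' y\<bar> powr p)" by (rule growu)
      ultimately show "norm (W y (\<xi> + w' y)) \<le> norm (c2 * (1 + 2 powr p * (\<bar>\<xi>\<bar> powr p + \<bar>w' y\<bar> powr p)))"
        using W_nonneg[of y "\<xi> + w' y"] by simp
    qed
  qed
  have pt: "AE y in M. W y (ps y \<sigma>) + (\<sigma> * \<xi> + \<sigma> * w' y - \<sigma> * ps y \<sigma>) \<le> W y (\<xi> + w' y)"
    using AE_Gd
  proof eventually_elim
    case (elim y)
    interpret o: onedim "W y" p c1 c2 using Gd_good[OF elim] unfolding good_def .
    have "W y (o.psi \<sigma>) + deriv (W y) (o.psi \<sigma>) * ((\<xi> + w' y) - o.psi \<sigma>) \<le> W y (\<xi> + w' y)"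
      by (rule o.tangent)
    then show ?case using ps_Gd[OF elim, of \<sigma>] by (simp add: algebra_simps)
  qed
  have iL: "integrable M (\<lambda>y. \<sigma> * \<xi> + \<sigma> * w' y - \<sigma> * ps y \<sigma>)"
    using iwM integrable_ps by (auto intro!: Bochner_Integration.integrable_diff Bochner_Integration.integrable_add integrable_mult_right)
  have "integral\<^sup>L M (\<lambda>y. W y (ps y \<sigma>) + (\<sigma> * \<xi> + \<sigma> * w' y - \<sigma> * ps y \<sigma>)) \<le> integral\<^sup>L M (\<lambda>y. W y (\<xi> + w' y))"
    by (rule integral_mono_AE[OF Bochner_Integration.integrable_add[OF integrable_Wps iL] iW pt])
  moreover have "integral\<^sup>L M (\<lambda>y. W y (ps y \<sigma>) + (\<sigma> * \<xi> + \<sigma> * w' y - \<sigma> * ps y \<sigma>)) = Lf \<sigma> \<xi>"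
  proof -
    have "integral\<^sup>L M (\<lambda>y. W y (ps y \<sigma>) + (\<sigma> * \<xi> + \<sigma> * w' y - \<sigma> * ps y \<sigma>)) =
       Gf \<sigma> + integral\<^sup>L M (\<lambda>y. \<sigma> * \<xi> + \<sigma> * w' y - \<sigma> * ps y \<sigma>)"
      unfolding Gf_def by (rule Bochner_Integration.integral_add[OF integrable_Wps iL])
    also have "integral\<^sup>L M (\<lambda>y. \<sigma> * \<xi> + \<sigma> * w' y - \<sigma> * ps y \<sigma>) = 
       integral\<^sup>L M (\<lambda>y. \<sigma> * \<xi> + \<sigma> * w' y) - integral\<^sup>L M (\<lambda>y. \<sigma> * ps y \<sigma>)"
      by (rule Bochner_Integration.integral_diff) (use iwM integrable_ps in \<open>auto intro!: Bochner_Integration.integrable_add integrable_mult_right\<close>)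
    also have "integral\<^sup>L M (\<lambda>y. \<sigma> * \<xi> + \<sigma> * w' y) = integral\<^sup>L M (\<lambda>y. \<sigma> * \<xi>) + integral\<^sup>L M (\<lambda>y. \<sigma> * w' y)"
      by (rule Bochner_Integration.integral_add) (use iwM in \<open>auto intro!: integrable_mult_right\<close>)
    also have "integral\<^sup>L M (\<lambda>y. \<sigma> * \<xi>) = \<sigma> * \<xi>" using measure_M by simp
    also have "integral\<^sup>L M (\<lambda>y. \<sigma> * w' y) = 0" using int0 by simp
    also have "integral\<^sup>L M (\<lambda>y. \<sigma> * ps y \<sigma>) = \<sigma> * Phi \<sigma>" unfolding Phi_def by simp
    finally show ?thesis unfolding Lf_def by (simp add: algebra_simps)
  qed
  ultimately show ?thesis by (simp add: LBINT_M)
qed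

end

context dens begin

lemma meas_frac: "(\<lambda>y::real. frac y) \<in> borel_measurable borel"
  unfolding frac_def using borel_measurable_real_floor by measurable

lemma interval_same: "(LBINT t=ereal a..ereal a. f t) = (0::real)"
  by (simp add: interval_lebesgue_integral_def einterval_same set_lebesgue_integral_def)

lemma attain:
  assumes ph: "Phi \<sigma> = \<xi>"
  shows "\<exists>w w'. W1p_per p w w' \<and> (LBINT y=0..1. w y) = 0 \<and> (LBINT y=0..1. W y (\<xi> + w' y)) = Gf \<sigma>"
proof -
  interpret finite_measure M by (rule finM)
  define w' where "w' y = ps (frac y) \<sigma> - \<xi>" for y
  define B where "B = bnd \<sigma> + \<bar>\<xi>\<bar>"
  have mps: "(\<lambda>z. ps z \<sigma>) \<in> borel_measurable borel" using meas_ps[of \<sigma>] by (simp add: measurable_lborel1)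
  have mw'b: "w' \<in> borel_measurable borel"
    unfolding w'_def using measurable_compose[OF meas_frac mps] by measurable
  then have mw': "w' \<in> borel_measurable lborel" by (simp add: measurable_lborel1)
  have bw': "\<bar>w' y\<bar> \<le> B" for y
    using ps_bnd[of "frac y" \<sigma>] unfolding w'_def B_def by linarith
  have per': "w' (x + of_int n) = w' x" for x n by (simp add: w'_def)
  have per1: "w' (x + 1) = w' x" for x using per'[of x 1] by simp
  have aeM: "AE y in M. w' y = ps y \<sigma> - \<xi>"
  proof -
    have "AE y in lborel. y \<noteq> 1" by (rule AE_lborel_singleton)
    then have "AE y in lborel. y \<in> {0..1} \<longrightarrow> w' y = ps y \<sigma> - \<xi>"
    proof eventually_elim
      case (elim y)
      show ?case
      proof
        assume "y \<in> {0..1}"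
        then have "frac y = y" using elim by (intro frac_eq[THEN iffD2]) auto
        then show "w' y = ps y \<sigma> - \<xi>" by (simp add: w'_def)
      qed
    qed
    then show ?thesis using AE_restrict_space_iff[OF sets_M] by blast
  qed
  have "integral\<^sup>L M w' = integral\<^sup>L M (\<lambda>y. ps y \<sigma> - \<xi>)"
    by (rule integral_cong_AE) (use aeM mw' in \<open>auto intro: meas_M\<close>)
  also have "\<dots> = Phi \<sigma> - \<xi>" unfolding Phi_def
    using integrable_ps measure_M by (simp add: Bochner_Integration.integral_diff)
  finally have int0: "(LBINT t=0..1. w' t) = 0" using ph by (simp add: LBINT_M)
  define F where "F x = (LBINT t=ereal 0..ereal x. w' t)" for x
  have Fper: "F (x + 1) = F x" for x
  proof -
    have "F x + (LBINT t=ereal x..ereal (x + 1). w' t) = F (x + 1)"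
      unfolding F_def by (rule interval_integral_sum) (rule interval_integrable_bounded3[OF mw' bw'])
    moreover have "(LBINT t=ereal x..ereal (x + 1). w' t) = (LBINT t=0..1. w' t)"
      by (rule LBINT_period[OF per' mw' bw'])
    ultimately show ?thesis using int0 by simp
  qed
  have Fcont: "continuous_on UNIV F" unfolding F_def by (rule prim_lipschitz[OF mw' bw'])
  have mF: "F \<in> borel_measurable lborel"
    using borel_measurable_continuous_onI[OF Fcont] by (simp add: measurable_lborel1)
  have FB: "\<bar>F x\<bar> \<le> B * \<bar>x - 0\<bar>" for x unfolding F_def by (rule LBINT_bound[OF mw' bw'])
  have iF: "integrable M F"
  proof (rule integrable_const_bound[where B=B])
    show "AE x in M. norm (F x) \<le> B"
    proof (rule AE_I2)
      fix x assume "x \<in> space M"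
      then have "\<bar>x - 0\<bar> \<le> 1" by (simp add: space_restrict_space)
      moreover have "0 \<le> B" using bw'[of 0] by simp
      ultimately have "B * \<bar>x - 0\<bar> \<le> B" using mult_left_mono[of "\<bar>x - 0\<bar>" 1 B] by simp
      then show "norm (F x) \<le> B" using FB[of x] by simp
    qed
    show "F \<in> borel_measurable M" by (rule meas_M[OF mF])
  qed
  define C where "C = integral\<^sup>L M F"
  define w where "w x = F x - C" for x
  have F0: "F 0 = 0" unfolding F_def by (rule interval_same)
  have Wp: "W1p_per p w w'"
    unfolding W1p_per_def
  proof (intro conjI allI)
    show "w (x + 1) = w x" for x by (simp add: w_def Fper)
    show "w' (x + 1) = w' x" for x by (rule per1)
    show "w' \<in> borel_measurable lborel" by (rule mw')
    show "set_integrable lborel {0..1} (\<lambda>y. \<bar>w' y\<bar> powr p)"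
    proof (rule set_integrable_bounded[where B="B powr p"])
      show "(\<lambda>y. \<bar>w' y\<bar> powr p) \<in> borel_measurable lborel" using mw' by measurable
      show "\<bar>\<bar>w' x\<bar> powr p\<bar> \<le> B powr p" for x using bw'[of x] p2 by (simp add: powr_mono2)
    qed auto
    show "set_integrable lborel {0..1} w'" by (rule set_integrable_bounded[OF mw' bw']) auto
    show "w x = w 0 + (LBINT t=0..ereal x. w' t)" for x
      unfolding w_def F0 by (simp add: F_def zero_ereal_def)
  qed
  have "(LBINT y=0..1. w y) = integral\<^sup>L M F - integral\<^sup>L M (\<lambda>y. C)"
    unfolding LBINT_M w_def by (rule Bochner_Integration.integral_diff[OF iF]) simp
  then have w0: "(LBINT y=0..1. w y) = 0" using measure_M unfolding C_def by simp
  have "(LBINT y=0..1. W y (\<xi> + w' y)) = integral\<^sup>L M (\<lambda>y. W y (ps y \<sigma>))"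
    unfolding LBINT_M
  proof (rule integral_cong_AE)
    show "(\<lambda>y. W y (\<xi> + w' y)) \<in> borel_measurable M" 
      by (rule meas_M, rule meas_Wcomp) (use mw' in measurable)
    show "(\<lambda>y. W y (ps y \<sigma>)) \<in> borel_measurable M" by (rule meas_M, rule meas_Wps)
    show "AE y in M. W y (\<xi> + w' y) = W y (ps y \<sigma>)" using aeM by eventually_elim simp
  qed
  then have "(LBINT y=0..1. W y (\<xi> + w' y)) = Gf \<sigma>" unfolding Gf_def .
  with Wp w0 show ?thesis by blast
qed

definition "SS \<xi> = {(LBINT y=0..1. W y (\<xi> + w' y)) | w w'. W1p_per p w w' \<and> (LBINT y=0..1. w y) = 0}"

lemma Wstar_SS: "Wstar p W \<xi> = Inf (SS \<xi>)"
  unfolding Wstar_def SS_def by (rule refl)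

lemma SS_ne: "Gf (sg \<xi>) \<in> SS \<xi>"
proof -
  obtain w w' where a: "W1p_per p w w'" "(LBINT y=0..1. w y) = 0" "(LBINT y=0..1. W y (\<xi> + w' y)) = Gf (sg \<xi>)"
    using attain[OF Phi_sg[of \<xi>]] by blast
  show ?thesis unfolding SS_def
    by (rule CollectI, rule exI[of _ w], rule exI[of _ w']) (simp add: a)
qed

lemma SS_lower: "x \<in> SS \<xi> \<Longrightarrow> Lf \<sigma> \<xi> \<le> x"
  unfolding SS_def using lower_bound by blast

lemma Wstar_lower: "Lf \<sigma> \<xi> \<le> Wstar p W \<xi>"
  unfolding Wstar_SS by (rule cInf_greatest) (use SS_ne SS_lower in blast)+

lemma Wstar_eq: "Wstar p W \<xi> = Lf (sg \<xi>) \<xi>"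
proof (rule antisym)
  have "Inf (SS \<xi>) \<le> Gf (sg \<xi>)"
    by (rule cInf_lower[OF SS_ne]) (unfold bdd_below_def, use SS_lower in blast)
  then show "Wstar p W \<xi> \<le> Lf (sg \<xi>) \<xi>" unfolding Wstar_SS Lf_def by (simp add: Phi_sg)
  show "Lf (sg \<xi>) \<xi> \<le> Wstar p W \<xi>" by (rule Wstar_lower)
qed

lemma Wstar_deriv: "(Wstar p W has_real_derivative sg \<xi>) (at \<xi>)"
proof -
  let ?V = "Wstar p W"
  have up: "sg \<xi> * (\<eta> - \<xi>) \<le> ?V \<eta> - ?V \<xi>" for \<eta>
    using Wstar_lower[of "sg \<xi>" \<eta>] Wstar_eq[of \<xi>] unfolding Lf_def by (simp add: algebra_simps)
  have lo: "?V \<eta> - ?V \<xi> \<le> sg \<eta> * (\<eta> - \<xi>)" for \<eta>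
    using Wstar_lower[of "sg \<eta>" \<xi>] Wstar_eq[of \<eta>] unfolding Lf_def by (simp add: algebra_simps)
  have bound: "\<bar>(?V (\<xi> + h) - ?V \<xi>) / h - sg \<xi>\<bar> \<le> \<bar>sg (\<xi> + h) - sg \<xi>\<bar>" if "h \<noteq> 0" for h
  proof (cases "h > 0")
    case True
    have a: "sg \<xi> * h \<le> ?V (\<xi> + h) - ?V \<xi>" "?V (\<xi> + h) - ?V \<xi> \<le> sg (\<xi> + h) * h"
      using up[of "\<xi> + h"] lo[of "\<xi> + h"] by simp_all
    then have "sg \<xi> \<le> (?V (\<xi> + h) - ?V \<xi>) / h" "(?V (\<xi> + h) - ?V \<xi>) / h \<le> sg (\<xi> + h)"
      using True by (simp_all add: field_simps)
    then show ?thesis by linarith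
  next
    case False
    then have h: "h < 0" using that by simp
    have a: "sg \<xi> * h \<le> ?V (\<xi> + h) - ?V \<xi>" "?V (\<xi> + h) - ?V \<xi> \<le> sg (\<xi> + h) * h"
      using up[of "\<xi> + h"] lo[of "\<xi> + h"] by simp_all
    then have "(?V (\<xi> + h) - ?V \<xi>) / h \<le> sg \<xi>" "sg (\<xi> + h) \<le> (?V (\<xi> + h) - ?V \<xi>) / h"
      using h by (simp_all add: field_simps)
    then show ?thesis by linarith
  qed
  have c: "((\<lambda>h. sg (\<xi> + h)) \<longlongrightarrow> sg \<xi>) (at 0)"
  proof -
    have "isCont (\<lambda>h. sg (\<xi> + h)) 0"
      using sg_cont[of \<xi>] by (intro continuous_intros isCont_o2[where f="\<lambda>h. \<xi> + h" and g=sg]) auto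
    then show ?thesis unfolding isCont_def by simp
  qed
  have c2: "((\<lambda>h. \<bar>sg (\<xi> + h) - sg \<xi>\<bar>) \<longlongrightarrow> 0) (at 0)"
    using tendsto_rabs[OF tendsto_diff[OF c tendsto_const[of "sg \<xi>"]]] by simp
  have "((\<lambda>h. (?V (\<xi> + h) - ?V \<xi>) / h - sg \<xi>) \<longlongrightarrow> 0) (at 0)"
  proof (rule tendsto_sandwich[where f="\<lambda>h. - \<bar>sg (\<xi> + h) - sg \<xi>\<bar>" and h="\<lambda>h. \<bar>sg (\<xi> + h) - sg \<xi>\<bar>"])
    have b1: "\<forall>h. h \<noteq> 0 \<longrightarrow> h \<in> UNIV \<longrightarrow> - \<bar>sg (\<xi> + h) - sg \<xi>\<bar> \<le> (?V (\<xi> + h) - ?V \<xi>) / h - sg \<xi>"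
      proof (intro allI impI)
        fix h :: real assume "h \<noteq> 0"
        then have "\<bar>(?V (\<xi> + h) - ?V \<xi>) / h - sg \<xi>\<bar> \<le> \<bar>sg (\<xi> + h) - sg \<xi>\<bar>" by (rule bound)
        then show "- \<bar>sg (\<xi> + h) - sg \<xi>\<bar> \<le> (?V (\<xi> + h) - ?V \<xi>) / h - sg \<xi>" by (simp add: abs_le_iff)
      qed
    show "\<forall>\<^sub>F h in at 0. - \<bar>sg (\<xi> + h) - sg \<xi>\<bar> \<le> (?V (\<xi> + h) - ?V \<xi>) / h - sg \<xi>"
      unfolding eventually_at_filter by (rule always_eventually[OF b1])
    have b2: "\<forall>h. h \<noteq> 0 \<longrightarrow> h \<in> UNIV \<longrightarrow> (?V (\<xi> + h) - ?V \<xi>) / h - sg \<xi> \<le> \<bar>sg (\<xi> + h) - sg \<xi>\<bar>"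
      proof (intro allI impI)
        fix h :: real assume "h \<noteq> 0"
        then have "\<bar>(?V (\<xi> + h) - ?V \<xi>) / h - sg \<xi>\<bar> \<le> \<bar>sg (\<xi> + h) - sg \<xi>\<bar>" by (rule bound)
        then show "(?V (\<xi> + h) - ?V \<xi>) / h - sg \<xi> \<le> \<bar>sg (\<xi> + h) - sg \<xi>\<bar>" by (simp add: abs_le_iff)
      qed
    show "\<forall>\<^sub>F h in at 0. (?V (\<xi> + h) - ?V \<xi>) / h - sg \<xi> \<le> \<bar>sg (\<xi> + h) - sg \<xi>\<bar>"
      unfolding eventually_at_filter by (rule always_eventually[OF b2])
    show "((\<lambda>h. - \<bar>sg (\<xi> + h) - sg \<xi>\<bar>) \<longlongrightarrow> 0) (at 0)" using tendsto_minus[OF c2] by simp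
    show "((\<lambda>h. \<bar>sg (\<xi> + h) - sg \<xi>\<bar>) \<longlongrightarrow> 0) (at 0)" by (rule c2)
  qed
  then have "((\<lambda>h. (?V (\<xi> + h) - ?V \<xi>) / h) \<longlongrightarrow> sg \<xi>) (at 0)"
    using tendsto_add[OF _ tendsto_const[of "sg \<xi>"]] by fastforce
  then show ?thesis by (simp add: DERIV_def)
qed

end

context dens begin

lemma dqs_nonGd: "y \<notin> Gd \<Longrightarrow> dqs y \<sigma> h = 0" by (simp add: dqs_def ps_def dps_def)

lemma dqs_nonneg: "0 \<le> dqs y \<sigma> h"
proof (cases "y \<in> Gd")
  case True
  interpret o: onedim "W y" p c1 c2 using Gd_good[OF True] unfolding good_def .
  show ?thesis using o.dq_pos[of \<sigma> h] dqs_Gd[OF True, of \<sigma> h] by simp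
qed (simp add: dqs_nonGd)

lemma dqs_0: "dqs y \<sigma> 0 = dps y \<sigma>" by (simp add: dqs_def)

lemma dqs_eq: assumes "h \<noteq> 0" shows "(Phi (\<sigma> + h) - Phi \<sigma>) / h = integral\<^sup>L M (\<lambda>y. dqs y \<sigma> h)"
proof -
  have "integral\<^sup>L M (\<lambda>y. dqs y \<sigma> h) = integral\<^sup>L M (\<lambda>y. (ps y (\<sigma> + h) - ps y \<sigma>) / h)"
    using assms by (simp add: dqs_def)
  also have "\<dots> = integral\<^sup>L M (\<lambda>y. ps y (\<sigma> + h) - ps y \<sigma>) / h" by simp
  also have "integral\<^sup>L M (\<lambda>y. ps y (\<sigma> + h) - ps y \<sigma>) = Phi (\<sigma> + h) - Phi \<sigma>"
    unfolding Phi_def by (rule Bochner_Integration.integral_diff[OF integrable_ps integrable_ps])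
  finally show ?thesis by simp
qed

lemma dqs_cont: "AE y in M. isCont (\<lambda>h. dqs y \<sigma> h) 0"
  using AE_Gd
proof eventually_elim
  case (elim y)
  interpret o: onedim "W y" p c1 c2 using Gd_good[OF elim] unfolding good_def .
  have "(\<lambda>h. dqs y \<sigma> h) = o.dq \<sigma>" using dqs_Gd[OF elim] by (intro ext) simp
  then show ?case using o.dq_cont by simp
qed

lemma meas_dqsM: "(\<lambda>y. dqs y \<sigma> h) \<in> borel_measurable M" by (rule meas_M) (rule meas_dqs)

lemma Phi_deriv_gen:
  assumes gi: "integrable M g" and r: "0 < r"
    and bnd: "AE y in M. \<forall>h. \<bar>h - 0\<bar> < r \<longrightarrow> \<bar>dqs y \<sigma> h\<bar> \<le> g y"
  shows "integrable M (\<lambda>y. dps y \<sigma>)" "(Phi has_real_derivative integral\<^sup>L M (\<lambda>y. dps y \<sigma>)) (at \<sigma>)"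
proof -
  have c: "isCont (\<lambda>h. integral\<^sup>L M (\<lambda>y. dqs y \<sigma> h)) 0"
    by (rule integral_isCont_dominated[OF meas_dqsM gi r bnd dqs_cont])
  show "integrable M (\<lambda>y. dps y \<sigma>)"
  proof (rule Bochner_Integration.integrable_bound[OF gi])
    show "(\<lambda>y. dps y \<sigma>) \<in> borel_measurable M" by (rule meas_M) (rule meas_dps)
    show "AE y in M. norm (dps y \<sigma>) \<le> norm (g y)"
      using bnd by eventually_elim (use r in \<open>auto simp: dqs_0[symmetric] intro: order_trans[OF _ abs_ge_self]\<close>)
  qed
  have "((\<lambda>h. integral\<^sup>L M (\<lambda>y. dqs y \<sigma> h)) \<longlongrightarrow> integral\<^sup>L M (\<lambda>y. dps y \<sigma>)) (at 0)"
    using c unfolding isCont_def by (simp add: dqs_0)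
  moreover have "\<forall>\<^sub>F h in at 0. integral\<^sup>L M (\<lambda>y. dqs y \<sigma> h) = (Phi (\<sigma> + h) - Phi \<sigma>) / h"
    unfolding eventually_at_filter by (rule always_eventually) (auto simp: dqs_eq)
  ultimately have "((\<lambda>h. (Phi (\<sigma> + h) - Phi \<sigma>) / h) \<longlongrightarrow> integral\<^sup>L M (\<lambda>y. dps y \<sigma>)) (at 0)"
    using tendsto_cong by fastforce
  then show "(Phi has_real_derivative integral\<^sup>L M (\<lambda>y. dps y \<sigma>)) (at \<sigma>)"
    by (simp add: DERIV_def)
qed

lemma Phi_deriv_pos:
  assumes "0 < \<sigma>"
  shows "integrable M (\<lambda>y. dps y \<sigma>)" "(Phi has_real_derivative integral\<^sup>L M (\<lambda>y. dps y \<sigma>)) (at \<sigma>)"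
proof -
  define g where "g y = 4 * (ps y (\<sigma>/2) - ps y (\<sigma>/4)) / \<sigma>" for y
  have gi: "integrable M g" unfolding g_def
    by (intro integrable_divide integrable_mult_right Bochner_Integration.integrable_diff integrable_ps)
  have b: "AE y in M. \<forall>h. \<bar>h - 0\<bar> < \<sigma>/2 \<longrightarrow> \<bar>dqs y \<sigma> h\<bar> \<le> g y"
  proof (rule AE_I2, intro allI impI)
    fix y h assume h: "\<bar>h - 0\<bar> < \<sigma>/2"
    show "\<bar>dqs y \<sigma> h\<bar> \<le> g y"
    proof (cases "y \<in> Gd")
      case True
      interpret o: onedim "W y" p c1 c2 using Gd_good[OF True] unfolding good_def .
      have "o.dq \<sigma> h \<le> 4 * (o.psi (\<sigma>/2) - o.psi (\<sigma>/4)) / \<sigma>" using h assms by (intro o.dq_bound_pos) auto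
      then show ?thesis using dqs_nonneg[of y \<sigma> h] unfolding g_def dqs_Gd[OF True] ps_Gd[OF True] by simp
    qed (simp add: g_def dqs_nonGd ps_nonGd)
  qed
  show "integrable M (\<lambda>y. dps y \<sigma>)" "(Phi has_real_derivative integral\<^sup>L M (\<lambda>y. dps y \<sigma>)) (at \<sigma>)"
    using Phi_deriv_gen[OF gi _ b] assms by simp_all
qed

lemma Phi_deriv_neg:
  assumes "\<sigma> < 0"
  shows "integrable M (\<lambda>y. dps y \<sigma>)" "(Phi has_real_derivative integral\<^sup>L M (\<lambda>y. dps y \<sigma>)) (at \<sigma>)"
proof -
  define g where "g y = 4 * (ps y (\<sigma>/4) - ps y (\<sigma>/2)) / (- \<sigma>)" for y
  have gi: "integrable M g" unfolding g_def
    by (intro integrable_divide integrable_mult_right Bochner_Integration.integrable_diff integrable_ps)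
  have b: "AE y in M. \<forall>h. \<bar>h - 0\<bar> < - \<sigma>/2 \<longrightarrow> \<bar>dqs y \<sigma> h\<bar> \<le> g y"
  proof (rule AE_I2, intro allI impI)
    fix y h assume h: "\<bar>h - 0\<bar> < - \<sigma>/2"
    show "\<bar>dqs y \<sigma> h\<bar> \<le> g y"
    proof (cases "y \<in> Gd")
      case True
      interpret o: onedim "W y" p c1 c2 using Gd_good[OF True] unfolding good_def .
      have "o.dq \<sigma> h \<le> 4 * (o.psi (\<sigma>/4) - o.psi (\<sigma>/2)) / (- \<sigma>)" using h assms by (intro o.dq_bound_neg) auto
      then show ?thesis using dqs_nonneg[of y \<sigma> h] unfolding g_def dqs_Gd[OF True] ps_Gd[OF True] by simp
    qed (simp add: g_def dqs_nonGd ps_nonGd)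
  qed
  show "integrable M (\<lambda>y. dps y \<sigma>)" "(Phi has_real_derivative integral\<^sup>L M (\<lambda>y. dps y \<sigma>)) (at \<sigma>)"
    using Phi_deriv_gen[OF gi _ b] assms by simp_all
qed

lemma Phi_deriv_nz:
  assumes "\<sigma> \<noteq> 0"
  shows "integrable M (\<lambda>y. dps y \<sigma>)" "(Phi has_real_derivative integral\<^sup>L M (\<lambda>y. dps y \<sigma>)) (at \<sigma>)"
  using Phi_deriv_pos[of \<sigma>] Phi_deriv_neg[of \<sigma>] assms by (cases "0 < \<sigma>"; simp)+

lemma dqs_bound_0: "dqs y 0 h \<le> dps y 0"
proof (cases "y \<in> Gd")
  case True
  interpret o: onedim "W y" p c1 c2 using Gd_good[OF True] unfolding good_def .
  show ?thesis using o.dq_bound_0[of h] unfolding dqs_Gd[OF True] dps_Gd[OF True] .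
qed (simp add: dqs_nonGd dps_nonGd)

lemma Phi_deriv_0:
  assumes gi: "integrable M (\<lambda>y. dps y 0)"
  shows "(Phi has_real_derivative integral\<^sup>L M (\<lambda>y. dps y 0)) (at 0)"
proof -
  have b: "AE y in M. \<forall>h. \<bar>h - 0\<bar> < 1 \<longrightarrow> \<bar>dqs y 0 h\<bar> \<le> dps y 0"
    by (rule AE_I2) (use dqs_bound_0 dqs_nonneg in \<open>auto\<close>)
  show ?thesis using Phi_deriv_gen[OF gi _ b] by simp
qed


lemma dps_nonneg: "0 \<le> dps y \<sigma>" using dqs_nonneg[of y \<sigma> 0] by (simp add: dqs_0)

lemma Phi_inf_0:
  assumes ni: "\<not> integrable M (\<lambda>y. dps y 0)"
  shows "filterlim (\<lambda>h. Phi h / h) at_top (at 0)"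
  unfolding filterlim_at_top
proof
  fix K :: real
  interpret finite_measure M by (rule finM)
  define f where "f n y = min (dps y 0) (real n)" for n :: nat and y
  have fi: "integrable M (f n)" for n
  proof (rule integrable_const_bound[where B="real n"])
    show "AE x in M. norm (f n x) \<le> real n" using dps_nonneg by (auto simp: f_def)
    show "f n \<in> borel_measurable M" unfolding f_def by (rule meas_M) measurable
  qed
  have "\<exists>n. K + 1 < integral\<^sup>L M (f n)"
  proof (rule ccontr)
    assume "\<not> (\<exists>n. K + 1 < integral\<^sup>L M (f n))"
    then have bd: "\<And>n. integral\<^sup>L M (f n) \<le> K + 1" by (simp add: not_less)
    have inc: "incseq (\<lambda>n. integral\<^sup>L M (f n))"
      by (intro incseq_SucI integral_mono fi) (auto simp: f_def)
    have conv: "(\<lambda>n. integral\<^sup>L M (f n)) \<longlonglongrightarrow> (SUP n. integral\<^sup>L M (f n))"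
      by (rule LIMSEQ_incseq_SUP[OF _ inc]) (use bd in \<open>auto simp: bdd_above_def\<close>)
    have "integrable M (\<lambda>y. dps y 0)"
    proof (rule integrable_monotone_convergence[OF fi _ _ conv])
      show "AE x in M. mono (\<lambda>n. f n x)" by (auto simp: f_def mono_def intro: min.mono)
      show "AE x in M. (\<lambda>i. f i x) \<longlonglongrightarrow> dps x 0"
      proof (rule AE_I2)
        fix x
        have "\<forall>\<^sub>F n in sequentially. f n x = dps x 0"
          unfolding eventually_sequentially
        proof (rule exI[of _ "nat \<lceil>dps x 0\<rceil>"], intro allI impI)
          fix n assume "nat \<lceil>dps x 0\<rceil> \<le> n"
          then have "real (nat \<lceil>dps x 0\<rceil>) \<le> real n" by simp
          moreover have "dps x 0 \<le> real (nat \<lceil>dps x 0\<rceil>)" by (rule real_nat_ceiling_ge)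
          ultimately show "f n x = dps x 0" by (simp add: f_def min_def)
        qed
        then show "(\<lambda>i. f i x) \<longlonglongrightarrow> dps x 0" by (rule tendsto_eventually)
      qed
      show "(\<lambda>y. dps y 0) \<in> borel_measurable M" by (rule meas_M) (rule meas_dps)
    qed
    with ni show False by simp
  qed
  then obtain n where n: "K + 1 < integral\<^sup>L M (f n)" by blast
  define m where "m h y = min (dqs y 0 h) (real n)" for h y
  have mi: "integrable M (m h)" for h
  proof (rule integrable_const_bound[where B="real n"])
    show "AE x in M. norm (m h x) \<le> real n" using dqs_nonneg by (auto simp: m_def)
    show "m h \<in> borel_measurable M" unfolding m_def by (rule meas_M) measurable
  qed
  have cm: "isCont (\<lambda>h. integral\<^sup>L M (m h)) 0"
  proof (rule integral_isCont_dominated[where g="\<lambda>y. real n" and r=1])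
    show "\<And>h. m h \<in> borel_measurable M" unfolding m_def by (rule meas_M) measurable
    show "AE y in M. \<forall>h. \<bar>h - 0\<bar> < 1 \<longrightarrow> \<bar>m h y\<bar> \<le> real n"
      using dqs_nonneg by (auto simp: m_def)
    show "AE y in M. isCont (\<lambda>h. m h y) 0"
      using dqs_cont[of 0] by eventually_elim (simp add: m_def continuous_intros)
    show "integrable M (\<lambda>y. real n)" by simp
  qed (rule zero_less_one)
  have "m 0 = f n" by (rule ext) (simp add: m_def f_def dqs_0)
  then have m0: "integral\<^sup>L M (m 0) = integral\<^sup>L M (f n)" by simp
  have "((\<lambda>h. integral\<^sup>L M (m h)) \<longlongrightarrow> integral\<^sup>L M (f n)) (at 0)"
    using cm m0 unfolding isCont_def by simp
  then have ev: "\<forall>\<^sub>F h in at 0. K < integral\<^sup>L M (m h)"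
    using n by (intro order_tendstoD(1)) auto
  moreover have "\<forall>\<^sub>F h in at 0. h \<noteq> 0" by (simp add: eventually_at_filter)
  ultimately show "\<forall>\<^sub>F h in at 0. K \<le> Phi h / h"
  proof eventually_elim
    case (elim h)
    have ih: "integrable M (\<lambda>y. dqs y 0 h)"
      using elim(2) by (simp add: dqs_def) (intro integrable_divide Bochner_Integration.integrable_diff integrable_ps)
    have "integral\<^sup>L M (m h) \<le> integral\<^sup>L M (\<lambda>y. dqs y 0 h)"
      by (rule integral_mono[OF mi ih]) (simp add: m_def)
    also have "\<dots> = Phi h / h" using dqs_eq[OF elim(2), of 0] by (simp add: Phi_0)
    finally show ?case using elim(1) by simp
  qed
qed

definition "Hs \<sigma> = (if integrable M (\<lambda>y. dps y \<sigma>) then 1 / integral\<^sup>L M (\<lambda>y. dps y \<sigma>) else 0)"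

lemma dps_int_pos: assumes "integrable M (\<lambda>y. dps y \<sigma>)" shows "0 < integral\<^sup>L M (\<lambda>y. dps y \<sigma>)"
proof -
  interpret finite_measure M by (rule finM)
  have "AE y in M. 0 < dps y \<sigma>"
    using AE_Gd
  proof eventually_elim
    case (elim y)
    interpret o: onedim "W y" p c1 c2 using Gd_good[OF elim] unfolding good_def .
    show ?case using o.dpsi_pos[of \<sigma>] dps_Gd[OF elim, of \<sigma>] by simp
  qed
  moreover have "emeasure M (space M) \<noteq> 0" using measure_M by (simp add: emeasure_eq_measure)
  ultimately have "integral\<^sup>L M (\<lambda>y. 0) < integral\<^sup>L M (\<lambda>y. dps y \<sigma>)"
    by (intro integral_less_AE_space assms) auto
  then show ?thesis by simp
qed

lemma Hs_nonneg: "0 \<le> Hs \<sigma>"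
  unfolding Hs_def using dps_int_pos[of \<sigma>] by auto

lemma sg_deriv: "(sg has_real_derivative Hs (sg \<xi>)) (at \<xi>)"
proof (cases "integrable M (\<lambda>y. dps y (sg \<xi>))")
  case True
  let ?D = "integral\<^sup>L M (\<lambda>y. dps y (sg \<xi>))"
  have D: "(Phi has_real_derivative ?D) (at (sg \<xi>))"
  proof (cases "sg \<xi> = 0")
    case True2: True
    have "integrable M (\<lambda>y. dps y 0)" using True True2 by simp
    from Phi_deriv_0[OF this] show ?thesis using True2 by simp
  next
    case False
    then show ?thesis by (rule Phi_deriv_nz(2))
  qed
  have "(sg has_real_derivative inverse ?D) (at \<xi>)"
    by (rule DERIV_inverse_function[where g=sg and x=\<xi> and a="\<xi> - 1" and b="\<xi> + 1", OF D])
       (use dps_int_pos[OF True] Phi_sg sg_cont in auto)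
  then show ?thesis using True by (simp add: Hs_def inverse_eq_divide)
next
  case False
  then have s0: "sg \<xi> = 0" using Phi_deriv_nz(1)[of "sg \<xi>"] by auto
  then have x0: "\<xi> = 0" using Phi_sg[of \<xi>] Phi_0 by simp
  have ni: "\<not> integrable M (\<lambda>y. dps y 0)" using False s0 by simp
  have sgat: "filterlim sg (at 0) (at 0)"
  proof (rule filterlim_atI)
    show "(sg \<longlongrightarrow> 0) (at 0)" using sg_cont[of 0] sg_0 unfolding isCont_def by simp
    have "sg h \<noteq> 0" if "h \<noteq> 0" for h using Phi_sg[of h] Phi_0 that by auto
    then show "\<forall>\<^sub>F h in at 0. sg h \<noteq> 0" by (auto simp: eventually_at_filter)
  qed
  have "filterlim (\<lambda>h. Phi (sg h) / sg h) at_top (at 0)"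
    by (rule filterlim_compose[OF Phi_inf_0[OF ni] sgat])
  then have "filterlim (\<lambda>h. h / sg h) at_top (at 0)" by (simp add: Phi_sg)
  then have "((\<lambda>h. inverse (h / sg h)) \<longlongrightarrow> 0) (at 0)" by (rule tendsto_inverse_0_at_top)
  then have "((\<lambda>h. (sg (0 + h) - sg 0) / h) \<longlongrightarrow> 0) (at 0)" by (simp add: sg_0)
  then have "(sg has_real_derivative 0) (at 0)" by (simp add: DERIV_def)
  then show ?thesis using x0 s0 False by (simp add: Hs_def)
qed

lemma deriv_Wstar: "deriv (Wstar p W) = sg"
  by (rule ext, rule DERIV_imp_deriv, rule Wstar_deriv)

lemma deriv2_Wstar: "deriv (deriv (Wstar p W)) \<xi> = Hs (sg \<xi>)"
  unfolding deriv_Wstar by (rule DERIV_imp_deriv, rule sg_deriv)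

end

lemma compare:
  assumes A: "dens p W1 a1 a2" and B: "dens p W2 b1 b2"
    and h5: "\<And>\<xi> \<zeta>. AE y in lborel. y \<in> {0<..<1} \<longrightarrow>
           \<xi> * deriv (W2 y) \<xi> \<ge> \<xi> * deriv (W1 y) \<xi> \<and>
           deriv (deriv (W2 y)) (recip_psi W2 y \<zeta>) \<ge> deriv (deriv (W1 y)) (recip_psi W1 y \<zeta>)"
  shows "dens.Hs p W1 a1 a2 (dens.sg p W1 a1 a2 \<xi>) \<le> dens.Hs p W2 b1 b2 (dens.sg p W2 b1 b2 \<xi>)"
proof -
  interpret A: dens p W1 a1 a2 by (rule A)
  interpret B: dens p W2 b1 b2 by (rule B)
  have "AE y in lborel. \<forall>r\<in>\<rat>. y \<in> {0<..<1} \<longrightarrow> r * deriv (W2 y) r \<ge> r * deriv (W1 y) r"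
  proof (rule AE_ball_countable'[OF _ countable_rat])
    fix r :: real
    show "AE y in lborel. y \<in> {0<..<1} \<longrightarrow> r * deriv (W2 y) r \<ge> r * deriv (W1 y) r"
      using h5[of r 0] by eventually_elim blast
  qed
  then have "AE y in lborel. y \<in> {0<..<1} \<longrightarrow> (\<forall>r\<in>\<rat>. r * deriv (W2 y) r \<ge> r * deriv (W1 y) r)"
    by eventually_elim blast
  then have h5r: "AE y in A.M. \<forall>r\<in>\<rat>. r * deriv (W2 y) r \<ge> r * deriv (W1 y) r"
    by (rule A.AE_M_lborel)
  have ps_le: "AE y in A.M. B.ps y \<tau> \<le> A.ps y \<tau>" if t: "0 \<le> \<tau>" for \<tau>
    using h5r A.AE_Gd B.AE_Gd
  proof eventually_elim
    case (elim y)
    interpret o1: onedim "W1 y" p a1 a2 using A.Gd_good[OF elim(2)] unfolding A.good_def .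
    interpret o2: onedim "W2 y" p b1 b2 using B.Gd_good[OF elim(3)] unfolding B.good_def .
    have "o2.psi \<tau> \<le> o1.psi \<tau>"
    proof (rule ccontr)
      assume "\<not> o2.psi \<tau> \<le> o1.psi \<tau>"
      then have lt: "o1.psi \<tau> < o2.psi \<tau>" by simp
      obtain r where r: "r \<in> \<rat>" "o1.psi \<tau> < r" "r < o2.psi \<tau>" using Rats_dense_in_real[OF lt] by blast
      have r0: "0 < r" using r o1.psi_nonneg[OF t] by linarith
      have "deriv (W1 y) (o1.psi \<tau>) < deriv (W1 y) r" using r(2) by (rule o1.f1_less)
      then have a: "\<tau> < deriv (W1 y) r" by simp
      have "deriv (W2 y) r < deriv (W2 y) (o2.psi \<tau>)" using r(3) by (rule o2.f1_less)
      then have b: "deriv (W2 y) r < \<tau>" by simp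
      have "r * deriv (W1 y) r \<le> r * deriv (W2 y) r" using elim(1) r(1) by blast
      then have "deriv (W1 y) r \<le> deriv (W2 y) r" using r0 by simp
      then show False using a b by linarith
    qed
    then show ?case using A.ps_Gd[OF elim(2)] B.ps_Gd[OF elim(3)] by simp
  qed
  have ps_ge: "AE y in A.M. A.ps y \<tau> \<le> B.ps y \<tau>" if t: "\<tau> \<le> 0" for \<tau>
    using h5r A.AE_Gd B.AE_Gd
  proof eventually_elim
    case (elim y)
    interpret o1: onedim "W1 y" p a1 a2 using A.Gd_good[OF elim(2)] unfolding A.good_def .
    interpret o2: onedim "W2 y" p b1 b2 using B.Gd_good[OF elim(3)] unfolding B.good_def .
    have "o1.psi \<tau> \<le> o2.psi \<tau>"
    proof (rule ccontr)
      assume "\<not> o1.psi \<tau> \<le> o2.psi \<tau>"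
      then have lt: "o2.psi \<tau> < o1.psi \<tau>" by simp
      obtain r where r: "r \<in> \<rat>" "o2.psi \<tau> < r" "r < o1.psi \<tau>" using Rats_dense_in_real[OF lt] by blast
      have r0: "r < 0" using r o1.psi_nonpos[OF t] by linarith
      have "deriv (W1 y) r < deriv (W1 y) (o1.psi \<tau>)" using r(3) by (rule o1.f1_less)
      then have a: "deriv (W1 y) r < \<tau>" by simp
      have "deriv (W2 y) (o2.psi \<tau>) < deriv (W2 y) r" using r(2) by (rule o2.f1_less)
      then have b: "\<tau> < deriv (W2 y) r" by simp
      have "r * deriv (W1 y) r \<le> r * deriv (W2 y) r" using elim(1) r(1) by blast
      then have "deriv (W2 y) r \<le> deriv (W1 y) r" using r0 by (simp add: mult_le_cancel_left)
      then show False using a b by linarith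
    qed
    then show ?case using A.ps_Gd[OF elim(2)] B.ps_Gd[OF elim(3)] by simp
  qed
  have dps_le: "AE y in A.M. B.dps y \<zeta> \<le> A.dps y \<zeta>" for \<zeta>
  proof -
    have "AE y in A.M. deriv (deriv (W2 y)) (recip_psi W2 y \<zeta>) \<ge> deriv (deriv (W1 y)) (recip_psi W1 y \<zeta>)"
    proof (rule A.AE_M_lborel)
      show "AE y in lborel. y \<in> {0<..<1} \<longrightarrow> deriv (deriv (W2 y)) (recip_psi W2 y \<zeta>) \<ge> deriv (deriv (W1 y)) (recip_psi W1 y \<zeta>)"
        using h5[of 0 \<zeta>] by eventually_elim blast
    qed
    then show ?thesis using A.AE_Gd B.AE_Gd
    proof eventually_elim
      case (elim y)
      interpret o1: onedim "W1 y" p a1 a2 using A.Gd_good[OF elim(2)] unfolding A.good_def .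
      have p1: "0 < deriv (deriv (W1 y)) (recip_psi W1 y \<zeta>)" by (rule o1.pos)
      have "1 / deriv (deriv (W2 y)) (recip_psi W2 y \<zeta>) \<le> 1 / deriv (deriv (W1 y)) (recip_psi W1 y \<zeta>)"
        using p1 elim(1) by (intro divide_left_mono) auto
      then show ?case using elim(2,3) by (simp add: A.dps_def B.dps_def)
    qed
  qed
  have dpsB_pos: "AE y in A.M. B.dps y b \<le> B.dps y a" if "0 \<le> a" "a \<le> b" for a b
    using B.AE_Gd
  proof eventually_elim
    case (elim y)
    interpret o2: onedim "W2 y" p b1 b2 using B.Gd_good[OF elim] unfolding B.good_def .
    show ?case using o2.dpsi_mono_pos[OF that] B.dps_Gd[OF elim] by simp
  qed
  have dpsB_neg: "AE y in A.M. B.dps y a \<le> B.dps y b" if "a \<le> b" "b \<le> 0" for a b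
    using B.AE_Gd
  proof eventually_elim
    case (elim y)
    interpret o2: onedim "W2 y" p b1 b2 using B.Gd_good[OF elim] unfolding B.good_def .
    show ?case using o2.dpsi_mono_neg[OF that] B.dps_Gd[OF elim] by simp
  qed
  have Phi_le: "B.Phi \<tau> \<le> A.Phi \<tau>" if "0 \<le> \<tau>" for \<tau>
    unfolding A.Phi_def B.Phi_def by (rule integral_mono_AE[OF B.integrable_ps A.integrable_ps ps_le[OF that]])
  have Phi_ge: "A.Phi \<tau> \<le> B.Phi \<tau>" if "\<tau> \<le> 0" for \<tau>
    unfolding A.Phi_def B.Phi_def by (rule integral_mono_AE[OF A.integrable_ps B.integrable_ps ps_ge[OF that]])
  let ?s1 = "A.sg \<xi>" and ?s2 = "B.sg \<xi>"
  show ?thesis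
  proof (cases "\<xi>" "0::real" rule: linorder_cases)
    case greater
    have s1: "0 < ?s1" by (rule A.sg_pos[OF greater])
    have s12: "?s1 \<le> ?s2"
    proof (rule ccontr)
      assume "\<not> ?s1 \<le> ?s2"
      then have "B.Phi ?s2 < B.Phi ?s1" by (intro B.Phi_less) simp
      also have "\<dots> \<le> A.Phi ?s1" using Phi_le s1 by simp
      finally show False by (simp add: A.Phi_sg B.Phi_sg)
    qed
    have s2: "0 < ?s2" using s1 s12 by simp
    have iA: "integrable A.M (\<lambda>y. A.dps y ?s1)" using A.Phi_deriv_nz(1) s1 by simp
    have iB1: "integrable A.M (\<lambda>y. B.dps y ?s1)" using B.Phi_deriv_nz(1) s1 by simp
    have iB2: "integrable A.M (\<lambda>y. B.dps y ?s2)" using B.Phi_deriv_nz(1) s2 by simp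
    have "integral\<^sup>L A.M (\<lambda>y. B.dps y ?s2) \<le> integral\<^sup>L A.M (\<lambda>y. B.dps y ?s1)"
      by (rule integral_mono_AE[OF iB2 iB1 dpsB_pos]) (use s1 s12 in auto)
    also have "\<dots> \<le> integral\<^sup>L A.M (\<lambda>y. A.dps y ?s1)"
      by (rule integral_mono_AE[OF iB1 iA dps_le])
    finally have le: "integral\<^sup>L A.M (\<lambda>y. B.dps y ?s2) \<le> integral\<^sup>L A.M (\<lambda>y. A.dps y ?s1)" .
    have pB: "0 < integral\<^sup>L A.M (\<lambda>y. B.dps y ?s2)" by (rule B.dps_int_pos[OF iB2])
    have "1 / integral\<^sup>L A.M (\<lambda>y. A.dps y ?s1) \<le> 1 / integral\<^sup>L A.M (\<lambda>y. B.dps y ?s2)"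
      using pB le by (intro divide_left_mono) auto
    then show ?thesis using iA iB2 by (simp add: A.Hs_def B.Hs_def)
  next
    case less
    have s1: "?s1 < 0" by (rule A.sg_neg[OF less])
    have s12: "?s2 \<le> ?s1"
    proof (rule ccontr)
      assume "\<not> ?s2 \<le> ?s1"
      then have "B.Phi ?s1 < B.Phi ?s2" by (intro B.Phi_less) simp
      moreover have "A.Phi ?s1 \<le> B.Phi ?s1" using Phi_ge s1 by simp
      ultimately show False by (simp add: A.Phi_sg B.Phi_sg)
    qed
    have s2: "?s2 < 0" using s1 s12 by simp
    have iA: "integrable A.M (\<lambda>y. A.dps y ?s1)" using A.Phi_deriv_nz(1) s1 by simp
    have iB1: "integrable A.M (\<lambda>y. B.dps y ?s1)" using B.Phi_deriv_nz(1) s1 by simp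
    have iB2: "integrable A.M (\<lambda>y. B.dps y ?s2)" using B.Phi_deriv_nz(1) s2 by simp
    have "integral\<^sup>L A.M (\<lambda>y. B.dps y ?s2) \<le> integral\<^sup>L A.M (\<lambda>y. B.dps y ?s1)"
      by (rule integral_mono_AE[OF iB2 iB1 dpsB_neg]) (use s1 s12 in auto)
    also have "\<dots> \<le> integral\<^sup>L A.M (\<lambda>y. A.dps y ?s1)"
      by (rule integral_mono_AE[OF iB1 iA dps_le])
    finally have le: "integral\<^sup>L A.M (\<lambda>y. B.dps y ?s2) \<le> integral\<^sup>L A.M (\<lambda>y. A.dps y ?s1)" .
    have pB: "0 < integral\<^sup>L A.M (\<lambda>y. B.dps y ?s2)" by (rule B.dps_int_pos[OF iB2])
    have "1 / integral\<^sup>L A.M (\<lambda>y. A.dps y ?s1) \<le> 1 / integral\<^sup>L A.M (\<lambda>y. B.dps y ?s2)"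
      using pB le by (intro divide_left_mono) auto
    then show ?thesis using iA iB2 by (simp add: A.Hs_def B.Hs_def)
  next
    case equal
    then have s: "?s1 = 0" "?s2 = 0" using A.sg_0 B.sg_0 by simp_all
    show ?thesis
    proof (cases "integrable A.M (\<lambda>y. A.dps y 0)")
      case True
      have iB: "integrable A.M (\<lambda>y. B.dps y 0)"
      proof (rule Bochner_Integration.integrable_bound[OF True])
        show "(\<lambda>y. B.dps y 0) \<in> borel_measurable A.M" by (rule A.meas_M) (rule B.meas_dps)
        show "AE y in A.M. norm (B.dps y 0) \<le> norm (A.dps y 0)"
          using dps_le[of 0] by eventually_elim (use A.dps_nonneg B.dps_nonneg in auto)
      qed
      have le: "integral\<^sup>L A.M (\<lambda>y. B.dps y 0) \<le> integral\<^sup>L A.M (\<lambda>y. A.dps y 0)"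
        by (rule integral_mono_AE[OF iB True dps_le])
      have pB: "0 < integral\<^sup>L A.M (\<lambda>y. B.dps y 0)" by (rule B.dps_int_pos[OF iB])
      have "1 / integral\<^sup>L A.M (\<lambda>y. A.dps y 0) \<le> 1 / integral\<^sup>L A.M (\<lambda>y. B.dps y 0)"
        using pB le by (intro divide_left_mono) auto
      then show ?thesis using True iB s by (simp add: A.Hs_def B.Hs_def)
    next
      case False
      then have "A.Hs ?s1 = 0" using s by (simp add: A.Hs_def)
      then show ?thesis using B.Hs_nonneg by simp
    qed
  qed
qed


lemma smooth_facts:
  assumes "\<forall>y. \<exists>D1 D2 D3. \<forall>\<xi>.
          (W y has_real_derivative D1 \<xi>) (at \<xi>) \<and>
          (D1 has_real_derivative D2 \<xi>) (at \<xi>) \<and>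
          (D2 has_real_derivative D3 \<xi>) (at \<xi>) \<and> isCont D3 \<xi>"
  shows "(W y has_real_derivative deriv (W y) x) (at x)"
    "(deriv (W y) has_real_derivative deriv (deriv (W y)) x) (at x)"
    "isCont (deriv (deriv (W y))) x"
proof -
  obtain D1 D2 D3 where D: "\<And>\<xi>. (W y has_real_derivative D1 \<xi>) (at \<xi>)"
      "\<And>\<xi>. (D1 has_real_derivative D2 \<xi>) (at \<xi>)" "\<And>\<xi>. (D2 has_real_derivative D3 \<xi>) (at \<xi>)"
    using assms by metis
  have e1: "deriv (W y) = D1" by (rule ext, rule DERIV_imp_deriv, rule D(1))
  have e3: "deriv D1 = D2" by (rule ext, rule DERIV_imp_deriv, rule D(2))
  have e2: "deriv (deriv (W y)) = D2" unfolding e1 e3 ..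
  show "(W y has_real_derivative deriv (W y) x) (at x)" unfolding e1 by (rule D(1))
  show "(deriv (W y) has_real_derivative deriv (deriv (W y)) x) (at x)" unfolding e1 e3 by (rule D(2))
  show "isCont (deriv (deriv (W y))) x" unfolding e2 by (rule DERIV_isCont[OF D(3)])
qed

lemma ed_dens:
  assumes p: "2 \<le> p" and ed: "energy_density p W"
    and h4: "AE y in lborel. y \<in> {0<..<1} \<longrightarrow>
           (\<forall>\<xi>. W y 0 \<le> W y \<xi>) \<and>
           (\<forall>a b. 0 \<le> a \<longrightarrow> a \<le> b \<longrightarrow> deriv (deriv (W y)) a \<le> deriv (deriv (W y)) b) \<and>
           (\<forall>a b. a \<le> b \<longrightarrow> b \<le> 0 \<longrightarrow> deriv (deriv (W y)) b \<le> deriv (deriv (W y)) a)"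
  shows "\<exists>c1 c2. dens p W c1 c2"
proof -
  have meas: "\<And>\<xi>. (\<lambda>y. W y \<xi>) \<in> borel_measurable lborel"
    and sm: "\<forall>y. \<exists>D1 D2 D3. \<forall>\<xi>.
          (W y has_real_derivative D1 \<xi>) (at \<xi>) \<and>
          (D1 has_real_derivative D2 \<xi>) (at \<xi>) \<and>
          (D2 has_real_derivative D3 \<xi>) (at \<xi>) \<and> isCont D3 \<xi>"
    and gr: "\<exists>c1 c2. 0 < c1 \<and> c1 \<le> c2 \<and>
        (\<forall>y \<xi>. c1 * \<bar>\<xi>\<bar> powr p \<le> W y \<xi> \<and> W y \<xi> \<le> c2 * (1 + \<bar>\<xi>\<bar> powr p))"
    and st: "AE y in lborel. \<forall>\<xi>. deriv (deriv (W y)) \<xi> > 0"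
    using ed unfolding energy_density_def by blast+
  obtain c1 c2 where c: "0 < c1" "\<And>y \<xi>. c1 * \<bar>\<xi>\<bar> powr p \<le> W y \<xi>" "\<And>y \<xi>. W y \<xi> \<le> c2 * (1 + \<bar>\<xi>\<bar> powr p)"
    using gr by blast
  have "dens p W c1 c2"
  proof (rule dens.intro[OF p c(1) meas])
    show "\<And>y x. (W y has_real_derivative deriv (W y) x) (at x)" by (rule smooth_facts(1)[OF sm])
    show "\<And>y x. (deriv (W y) has_real_derivative deriv (deriv (W y)) x) (at x)" by (rule smooth_facts(2)[OF sm])
    show "\<And>y x. isCont (deriv (deriv (W y))) x" by (rule smooth_facts(3)[OF sm])
    show "\<And>y x. c1 * \<bar>x\<bar> powr p \<le> W y x" by (rule c(2))
    show "\<And>y x. W y x \<le> c2 * (1 + \<bar>x\<bar> powr p)" by (rule c(3))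
    show "AE y in lborel. y \<in> {0<..<1} \<longrightarrow> (\<forall>\<xi>. deriv (deriv (W y)) \<xi> > 0) \<and>
           (\<forall>\<xi>. W y 0 \<le> W y \<xi>) \<and>
           (\<forall>a b. 0 \<le> a \<longrightarrow> a \<le> b \<longrightarrow> deriv (deriv (W y)) a \<le> deriv (deriv (W y)) b) \<and>
           (\<forall>a b. a \<le> b \<longrightarrow> b \<le> 0 \<longrightarrow> deriv (deriv (W y)) b \<le> deriv (deriv (W y)) a)"
      using st h4 by eventually_elim blast
  qed
  then show ?thesis by blast
qed

theorem lemma10:
  fixes p :: real and W1 W2 :: "real \<Rightarrow> real \<Rightarrow> real"
  assumes "2 \<le> p"
    and "energy_density p W1" and "energy_density p W2"
    and "\<And>W. W \<in> {W1, W2} \<Longrightarrow> AE y in lborel. y \<in> {0<..<1} \<longrightarrow>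
           (\<forall>\<xi>. W y 0 \<le> W y \<xi>) \<and>
           (\<forall>a b. 0 \<le> a \<longrightarrow> a \<le> b \<longrightarrow> deriv (deriv (W y)) a \<le> deriv (deriv (W y)) b) \<and>
           (\<forall>a b. a \<le> b \<longrightarrow> b \<le> 0 \<longrightarrow> deriv (deriv (W y)) b \<le> deriv (deriv (W y)) a)"
    and "\<And>\<xi> \<zeta>. AE y in lborel. y \<in> {0<..<1} \<longrightarrow>
           \<xi> * deriv (W2 y) \<xi> \<ge> \<xi> * deriv (W1 y) \<xi> \<and>
           deriv (deriv (W2 y)) (recip_psi W2 y \<zeta>) \<ge> deriv (deriv (W1 y)) (recip_psi W1 y \<zeta>)"
  shows "\<forall>\<xi>. deriv (deriv (Wstar p W2)) \<xi> \<ge> deriv (deriv (Wstar p W1)) \<xi>"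
proof
  fix \<xi>
  obtain a1 a2 where A: "dens p W1 a1 a2" using ed_dens[OF assms(1,2) assms(4)[of W1]] by auto
  obtain b1 b2 where B: "dens p W2 b1 b2" using ed_dens[OF assms(1,3) assms(4)[of W2]] by auto
  have "deriv (deriv (Wstar p W1)) \<xi> = dens.Hs p W1 a1 a2 (dens.sg p W1 a1 a2 \<xi>)"
    by (rule dens.deriv2_Wstar[OF A])
  moreover have "deriv (deriv (Wstar p W2)) \<xi> = dens.Hs p W2 b1 b2 (dens.sg p W2 b1 b2 \<xi>)"
    by (rule dens.deriv2_Wstar[OF B])
  moreover have "dens.Hs p W1 a1 a2 (dens.sg p W1 a1 a2 \<xi>) \<le> dens.Hs p W2 b1 b2 (dens.sg p W2 b1 b2 \<xi>)"
    by (rule compare[OF A B assms(5)])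
  ultimately show "deriv (deriv (Wstar p W2)) \<xi> \<ge> deriv (deriv (Wstar p W1)) \<xi>" by simp
qed


end
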